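(* Let $n,k\geq 1$ and let ${\bf m}=(m_1,\dots,m_k)$ be an array of nonnegative integers. For every permutation $\tau\in\mathfrak{S}_{k-1}$ there exists a bijection $\Psi_k:\mathcal{A}_n^k({\bf m})\to\mathcal{A}_n^k({\bf m}')$, where ${\bf m}'=(m_{\tau(1)},\dots,m_{\tau(k-1)},m_k)$, such that for every $\mathfrak{a}\in\mathcal{A}_n^k({\bf m})$, $$\bigl(\mathrm{des}(\mathfrak{a}),\mathrm{dez}(\mathfrak{a}),\mathrm{Der}(\mathfrak{a})\bigr)=\bigl(\mathrm{dez}(\Psi_k(\mathfrak{a})),\mathrm{des}(\Psi_k(\mathfrak{a})),\mathrm{Der}(\Psi_k(\mathfrak{a}))\bigr).$$
   Context: $[n]=\{1,\dots,n\}$ and $\mathfrak{S}_n$ is the set of permutations of $[n]$, written in one-line notation; $\mathrm{FIX}(\pi)=\{i:\pi(i)=i\}$. For an integer $k\ge 1$, a $k$-arrangement of $[n]$ is a pair $\mathfrak{a}=(\pi,\phi)$ with $\pi\in\mathfrak{S}_n$ and $\phi:\mathrm{FIX}(\pi)\to\{-1,\dots,-k\}$ an arbitrary function; $\mathcal{A}_n^k$ is the set of them. The positive reduction $\mathrm{red}^+(w)$ of an integer word $w$ replaces every occurrence of the $i$-th smallest positive letter of $w$ by $i$, for all $i$ (negative letters unchanged). The derangement form $\mathrm{df}_k(\mathfrak{a})$ is obtained from $\pi(1)\cdots\pi(n)$ by replacing $\pi(i)$ with $\phi(i)$ for each $i\in\mathrm{FIX}(\pi)$ and then applying positive reduction;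 the permutation form $\mathrm{pf}_k(\mathfrak{a})$ is obtained likewise, but replacing $\pi(i)$ by $\phi(i)$ only for those $i\in\mathrm{FIX}(\pi)$ with $\phi(i)\ne -k$. For an integer word $w=w_1\cdots w_n$, $\mathrm{des}(w)=|\{i\in[n-1]:w_i>w_{i+1}\}|$, and $\mathrm{Pos}(w)$ is the subword of positive letters. For $\mathfrak{a}\in\mathcal{A}_n^k$: $\mathrm{des}(\mathfrak{a})=\mathrm{des}(\mathrm{pf}_k(\mathfrak{a}))$, $\mathrm{dez}(\mathfrak{a})=\mathrm{des}(\mathrm{df}_k(\mathfrak{a}))$, $\mathrm{Der}(\mathfrak{a})=\mathrm{Pos}(\mathrm{df}_k(\mathfrak{a}))$, $\mathrm{fix}_i(\mathfrak{a})=|\{j\in\mathrm{FIX}(\pi):\phi(j)=-i\}|$. For ${\bf m}=(m_1,\dots,m_k)$, $\mathcal{A}_n^k({\bf m})=\{\mathfrak{a}\in\mathcal{A}_n^k:\mathrm{fix}_i(\mathfrak{a})=m_i,\ 1\le i\le k\}$. *)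

theory Defs
  imports "HOL-Combinatorics.Permutations"
begin

text \<open>A k-arrangement of [n] is a pair (pi, phi): pi a permutation of {1..n}
  (as a function nat => nat fixing everything outside {1..n}), phi a function on
  the fixed points of pi with values in {-1,...,-k}; phi is extended by 0 elsewhere
  so that each arrangement has a unique representation.\<close>

type_synonym arrangement = "(nat \<Rightarrow> nat) \<times> (nat \<Rightarrow> int)"

definition FIX :: "nat \<Rightarrow> (nat \<Rightarrow> nat) \<Rightarrow> nat set" where
  "FIX n \<pi> = {i \<in> {1..n}. \<pi> i = i}"

definition arrangements :: "nat \<Rightarrow> nat \<Rightarrow> arrangement set" where
  "arrangements n k = {(\<pi>, \<phi>). \<pi> permutes {1..n} \<and>
      (\<forall>i. if i \<in> FIX n \<pi> then \<phi> i \<in> {- int k .. -1} else \<phi> i = 0)}"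

definition red_pos :: "int list \<Rightarrow> int list" where
  "red_pos w = map (\<lambda>x. if 0 < x then int (card {y \<in> set w. 0 < y \<and> y \<le> x}) else x) w"

definition df :: "nat \<Rightarrow> nat \<Rightarrow> arrangement \<Rightarrow> int list" where
  "df n k a = red_pos (map (\<lambda>i. if i \<in> FIX n (fst a) then snd a i else int (fst a i)) [1..<n+1])"

definition pf :: "nat \<Rightarrow> nat \<Rightarrow> arrangement \<Rightarrow> int list" where
  "pf n k a = red_pos (map (\<lambda>i. if i \<in> FIX n (fst a) \<and> snd a i \<noteq> - int k
                                 then snd a i else int (fst a i)) [1..<n+1])"

definition des_word :: "int list \<Rightarrow> nat" where
  "des_word w = card {i. i + 1 < length w \<and> w ! i > w ! (i + 1)}"

definition Pos :: "int list \<Rightarrow> int list" where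
  "Pos w = filter (\<lambda>x. 0 < x) w"

definition des_arr :: "nat \<Rightarrow> nat \<Rightarrow> arrangement \<Rightarrow> nat" where
  "des_arr n k a = des_word (pf n k a)"

definition dez_arr :: "nat \<Rightarrow> nat \<Rightarrow> arrangement \<Rightarrow> nat" where
  "dez_arr n k a = des_word (df n k a)"

definition Der_arr :: "nat \<Rightarrow> nat \<Rightarrow> arrangement \<Rightarrow> int list" where
  "Der_arr n k a = Pos (df n k a)"

definition fix_i :: "nat \<Rightarrow> nat \<Rightarrow> arrangement \<Rightarrow> nat" where
  "fix_i n i a = card {j \<in> FIX n (fst a). snd a j = - int i}"

text \<open>m is the array (m_1,...,m_k) as a list of length k: m_i = m ! (i - 1).\<close>
definition arrangements_m :: "nat \<Rightarrow> nat \<Rightarrow> nat list \<Rightarrow> arrangement set" where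
  "arrangements_m n k m = {a \<in> arrangements n k. \<forall>i \<in> {1..k}. fix_i n i a = m ! (i - 1)}"

end

theory Submission
  imports Defs
begin

fun optR :: "('a \<Rightarrow> 'a \<Rightarrow> bool) \<Rightarrow> 'a option \<Rightarrow> 'a option \<Rightarrow> bool" where
  "optR R (Some x) (Some y) = R x y"
| "optR R _ _ = False"

fun cntp :: "('a \<Rightarrow> 'a \<Rightarrow> bool) \<Rightarrow> 'a option \<Rightarrow> 'a list \<Rightarrow> nat" where
  "cntp R p [] = 0"
| "cntp R p (x # w) = (if optR R p (Some x) then 1 else 0) + cntp R (Some x) w"

definition cnt :: "('a \<Rightarrow> 'a \<Rightarrow> bool) \<Rightarrow> 'a list \<Rightarrow> nat" where
  "cnt R w = cntp R None w"

lemma cntp_Some_card: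
  "cntp R (Some x) w = card {i. i < length w \<and> R ((x # w) ! i) ((x#w) ! Suc i)}"
proof (induction w arbitrary: x)
  case Nil then show ?case by simp
next
  case (Cons y w)
  have "{i. i < length (y # w) \<and> R ((x # y # w) ! i) ((x # y # w) ! Suc i)}
     = (if R x y then {0} else {}) \<union> Suc ` {i. i < length w \<and> R ((y # w) ! i) ((y#w) ! Suc i)}"
    by (auto simp: image_def less_Suc_eq_0_disj)
  then show ?case using Cons by (simp add: card_image)
qed

lemma des_word_cnt: "des_word w = cnt (\<lambda>a b. a > b) w"
proof (cases w)
  case Nil then show ?thesis by (simp add: des_word_def cnt_def)
next
  case (Cons x v)
  have "cnt (\<lambda>a b. a > b) w = cntp (\<lambda>a b. a > b) (Some x) v"
    using Cons by (simp add: cnt_def)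
  also have "\<dots> = des_word w" unfolding cntp_Some_card des_word_def Cons by simp
  finally show ?thesis by simp
qed

lemma cntp_append:
  "cntp R p (xs @ y # ys) = cntp R p (xs @ [y]) + cntp R (Some y) ys"
  by (induction xs arbitrary: p) auto

lemma cntp_cong:
  assumes "\<And>a b. a \<in> set w \<union> set_option p \<Longrightarrow> b \<in> set w \<Longrightarrow> R a b = S a b"
  shows "cntp R p w = cntp S p w"
  using assms
proof (induction w arbitrary: p)
  case Nil then show ?case by simp
next
  case (Cons x w)
  have "optR R p (Some x) = optR S p (Some x)"
    using Cons.prems by (cases p) auto
  moreover have "cntp R (Some x) w = cntp S (Some x) w"
    by (rule Cons.IH) (use Cons.prems in auto)
  ultimately show ?case by simp
qed

lemma cntp_map: "cntp R (map_option f p) (map f w) = cntp (\<lambda>a b. R (f a) (f b)) p w"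
proof (induction w arbitrary: p)
  case Nil then show ?case by simp
next
  case (Cons x w)
  have "optR R (map_option f p) (Some (f x)) = optR (\<lambda>a b. R (f a) (f b)) p (Some x)"
    by (cases p) auto
  then show ?case using Cons.IH[of "Some x"] by simp
qed

lemma cntp_snoc: "cntp R p (w @ [x]) = cntp R p w + (if optR R (if w = [] then p else Some (last w)) (Some x) then 1 else 0)"
  by (induction w arbitrary: p) auto

lemma cnt_rev: "cnt R (rev w) = cnt (\<lambda>a b. R b a) w"
proof (induction w)
  case Nil then show ?case by (simp add: cnt_def)
next
  case (Cons x w)
  show ?case
  proof (cases "w = []")
    case True then show ?thesis by (simp add: cnt_def)
  next
    case False
    then obtain y v where Cons2: "w = y # v" by (cases w) auto
    have "cnt R (rev (x # w)) = cnt R (rev w) + (if R (last (rev w)) x then 1 else 0)"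
      using Cons2 unfolding cnt_def rev.simps(2) cntp_snoc by simp
    also have "last (rev w) = y" using Cons2 by simp
    finally show ?thesis using Cons.IH Cons2 by (simp add: cnt_def)
  qed
qed

fun build :: "'a \<Rightarrow> 'a list \<Rightarrow> nat list \<Rightarrow> 'a list" where
  "build \<kappa> [] g = replicate (hd g) \<kappa>"
| "build \<kappa> (x # u) g = replicate (hd g) \<kappa> @ x # build \<kappa> u (tl g)"

fun gaps :: "'a \<Rightarrow> 'a list \<Rightarrow> nat list" where
  "gaps \<kappa> [] = [0]"
| "gaps \<kappa> (x # l) = (if x = \<kappa> then (hd (gaps \<kappa> l) + 1) # tl (gaps \<kappa> l) else 0 # gaps \<kappa> l)"

lemma gaps_ne: "gaps \<kappa> l \<noteq> []"
  by (induction l) auto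

lemma length_gaps: "length (gaps \<kappa> l) = length (filter (\<lambda>x. x \<noteq> \<kappa>) l) + 1"
  by (induction l) (auto simp: gaps_ne)

lemma build_gaps: "build \<kappa> (filter (\<lambda>x. x \<noteq> \<kappa>) l) (gaps \<kappa> l) = l"
proof (induction l)
  case Nil then show ?case by simp
next
  case (Cons x l)
  show ?case
  proof (cases "x = \<kappa>")
    case True
    obtain a r where g: "gaps \<kappa> l = a # r" by (meson list.exhaust gaps_ne)
    show ?thesis
    proof (cases "filter (\<lambda>x. x \<noteq> \<kappa>) l")
      case Nil then show ?thesis using Cons True g by simp
    next
      case (Cons y v) then show ?thesis using Cons.IH True g by simp
    qed
  next
    case False then show ?thesis using Cons by simp
  qed
qed

lemma filter_build: "\<kappa> \<notin> set u \<Longrightarrow> filter (\<lambda>x. x \<noteq> \<kappa>) (build \<kappa> u g) = u"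
  by (induction u arbitrary: g) auto

lemma gaps_replicate_append: "gaps \<kappa> (replicate a \<kappa> @ w) = (hd (gaps \<kappa> w) + a) # tl (gaps \<kappa> w)"
  by (induction a) (auto simp: gaps_ne)

lemma gaps_build: "\<kappa> \<notin> set u \<Longrightarrow> length g = length u + 1 \<Longrightarrow> gaps \<kappa> (build \<kappa> u g) = g"
proof (induction u arbitrary: g)
  case Nil
  then obtain a where "g = [a]" by (cases g) auto
  then show ?case using gaps_replicate_append[of \<kappa> a "[]"] by simp
next
  case (Cons x u)
  then obtain a r where g: "g = a # r" by (cases g) auto
  then show ?case using Cons gaps_replicate_append[of \<kappa> a "x # build \<kappa> u r"] by auto
qed

lemma length_build: "length g = length u + 1 \<Longrightarrow> length (build \<kappa> u g) = length u + sum_list g"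
proof (induction u arbitrary: g)
  case Nil then show ?case by (cases g) auto
next
  case (Cons x u) then show ?case by (cases g) auto
qed

lemma mset_build: "length g = length u + 1 \<Longrightarrow>
   mset (build \<kappa> u g) = mset u + replicate_mset (sum_list g) \<kappa>"
proof (induction u arbitrary: g)
  case Nil then show ?case by (cases g) auto
next
  case (Cons x u) then show ?case by (cases g) (auto simp: multiset_eq_iff)
qed

lemma map_build: "map f (build \<kappa> u g) = build (f \<kappa>) (map f u) g"
  by (induction u arbitrary: g) auto

lemma filter_build_other: "\<not> P \<kappa> \<Longrightarrow> filter P (build \<kappa> u g) = filter P u"
  by (induction u arbitrary: g) auto

lemma cntp_replicate:
  "\<not> R \<kappa> \<kappa> \<Longrightarrow> 0 < a \<Longrightarrow>
   cntp R p (replicate a \<kappa> @ w) = (if optR R p (Some \<kappa>) then 1 else 0) + cntp R (Some \<kappa>) w"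
proof (induction a arbitrary: p)
  case 0 then show ?case by simp
next
  case (Suc a)
  show ?case
  proof (cases a)
    case 0 then show ?thesis by simp
  next
    case (Suc b)
    then show ?thesis using Suc.IH[of "Some \<kappa>"] Suc.prems by simp
  qed
qed

definition dl :: "('a \<Rightarrow> 'a \<Rightarrow> bool) \<Rightarrow> 'a \<Rightarrow> 'a option \<Rightarrow> 'a list \<Rightarrow> nat \<Rightarrow> int" where
  "dl R \<kappa> p u s = (let lft = (if s = 0 then p else Some (u ! (s - 1)));
                       rgt = (if s < length u then Some (u ! s) else None) in
      of_bool (optR R lft (Some \<kappa>)) + of_bool (optR R (Some \<kappa>) rgt) - of_bool (optR R lft rgt))"

lemma dl_Suc: "dl R \<kappa> p (x # u) (Suc s) = dl R \<kappa> (Some x) u s"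
  by (simp add: dl_def)

lemma slot_formula:
  assumes "\<not> R \<kappa> \<kappa>" "length g = length u + 1"
  shows "int (cntp R p (build \<kappa> u g)) =
     int (cntp R p u) + (\<Sum>s<length u + 1. if 0 < g ! s then dl R \<kappa> p u s else 0)"
  using assms(2)
proof (induction u arbitrary: g p)
  case Nil
  then obtain a where g: "g = [a]" by (cases g) auto
  show ?case
  proof (cases "a = 0")
    case True then show ?thesis using g by simp
  next
    case False
    then have "cntp R p (replicate a \<kappa> @ []) = (if optR R p (Some \<kappa>) then 1 else 0)"
      using cntp_replicate[where R=R and \<kappa>=\<kappa> and w="[]", OF assms(1)] by simp
    then show ?thesis using g False by (simp add: dl_def)
  qed
next
  case (Cons x u)
  then obtain a r where g: "g = a # r" and lr: "length r = length u + 1" by (cases g) auto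
  have IH: "int (cntp R (Some x) (build \<kappa> u r)) =
     int (cntp R (Some x) u) + (\<Sum>s<length u + 1. if 0 < r ! s then dl R \<kappa> (Some x) u s else 0)"
    using Cons.IH[OF lr] .
  have sum: "(\<Sum>s<length (x # u) + 1. if 0 < g ! s then dl R \<kappa> p (x # u) s else 0)
      = (if 0 < a then dl R \<kappa> p (x # u) 0 else 0) +
        (\<Sum>s<length u + 1. if 0 < r ! s then dl R \<kappa> (Some x) u s else 0)"
    unfolding g length_Cons Suc_eq_plus1[symmetric]
    apply (subst sum.lessThan_Suc_shift)
    apply (simp only: dl_Suc nth_Cons_Suc)
    apply simp
    done
  show ?case
  proof (cases "a = 0")
    case True
    then show ?thesis using g IH sum by simp
  next
    case False
    have "cntp R p (build \<kappa> (x # u) g) = (if optR R p (Some \<kappa>) then 1 else 0) +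
       cntp R (Some \<kappa>) (x # build \<kappa> u r)"
      using g False cntp_replicate[where R=R and \<kappa>=\<kappa>, OF assms(1)] by simp
    then show ?thesis using g IH sum False by (simp add: dl_def)
  qed
qed

lemma card_trans:
  fixes q :: "nat \<Rightarrow> bool"
  shows "card {s. s < N \<and> q s \<and> \<not> q (Suc s)} + of_bool (q N)
       = card {s. s < N \<and> \<not> q s \<and> q (Suc s)} + of_bool (q 0)"
proof (induction N)
  case 0 then show ?case by simp
next
  case (Suc N)
  have e1: "{s. s < Suc N \<and> q s \<and> \<not> q (Suc s)} = {s. s < N \<and> q s \<and> \<not> q (Suc s)} \<union>
     (if q N \<and> \<not> q (Suc N) then {N} else {})" by (auto simp: less_Suc_eq)
  have e2: "{s. s < Suc N \<and> \<not> q s \<and> q (Suc s)} = {s. s < N \<and> \<not> q s \<and> q (Suc s)} \<union>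
     (if \<not> q N \<and> q (Suc N) then {N} else {})" by (auto simp: less_Suc_eq)
  show ?case using Suc unfolding e1 e2 by (cases "q N"; cases "q (Suc N)") auto
qed

lemma exists_sigma:
  fixes f1 f2 :: "nat \<Rightarrow> int"
  assumes X: "X \<subseteq> {..<N}" and Y: "Y \<subseteq> {..<N}" and XY: "X \<inter> Y = {}"
    and c: "card X = card Y"
    and h1: "\<And>s t. s \<in> X \<Longrightarrow> t \<in> Y \<Longrightarrow> f1 s = f2 t \<and> f2 s = f1 t"
    and h2: "\<And>s. s < N \<Longrightarrow> s \<notin> X \<Longrightarrow> s \<notin> Y \<Longrightarrow> f1 s = f2 s"
  shows "\<exists>\<sigma>. \<sigma> permutes {..<N} \<and> (\<forall>s. \<sigma> (\<sigma> s) = s) \<and>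
           (\<forall>s<N. f1 (\<sigma> s) = f2 s \<and> f2 (\<sigma> s) = f1 s)"
proof -
  have fX: "finite X" and fY: "finite Y" using X Y finite_subset by auto
  obtain h where h: "bij_betw h X Y" using finite_same_card_bij[OF fX fY c] by blast
  define \<sigma> where "\<sigma> s = (if s \<in> X then h s else if s \<in> Y then inv_into X h s else s)" for s
  have hY: "s \<in> X \<Longrightarrow> h s \<in> Y" for s using h by (auto simp: bij_betw_def)
  have iX: "s \<in> Y \<Longrightarrow> inv_into X h s \<in> X" for s using h
    by (metis bij_betw_def inv_into_into)
  have inv: "\<sigma> (\<sigma> s) = s" for s
  proof -
    consider "s \<in> X" | "s \<in> Y" | "s \<notin> X" "s \<notin> Y" by blast
    then show ?thesis
    proof cases
      case 1
      then have "h s \<notin> X" using hY XY by blast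
      then show ?thesis using 1 hY h unfolding \<sigma>_def by (auto simp: bij_betw_def)
    next
      case 2
      then have "s \<notin> X" using XY by blast
      then show ?thesis using 2 iX h unfolding \<sigma>_def
        by (auto simp: bij_betw_def f_inv_into_f)
    next
      case 3 then show ?thesis unfolding \<sigma>_def by simp
    qed
  qed
  have perm: "\<sigma> permutes {..<N}"
    unfolding permutes_def
  proof (intro conjI allI impI)
    fix s assume "s \<notin> {..<N}"
    then show "\<sigma> s = s" using X Y unfolding \<sigma>_def by auto
  next
    fix y show "\<exists>!x. \<sigma> x = y"
      by (metis inv)
  qed
  have fprop: "f1 (\<sigma> s) = f2 s \<and> f2 (\<sigma> s) = f1 s" if "s < N" for s
  proof -
    consider "s \<in> X" | "s \<in> Y" | "s \<notin> X" "s \<notin> Y" by blast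
    then show ?thesis
    proof cases
      case 1 then show ?thesis using h1[OF 1 hY[OF 1]] unfolding \<sigma>_def by simp
    next
      case 2
      then have "s \<notin> X" using XY by blast
      then show ?thesis using h1[OF iX[OF 2] 2] 2 unfolding \<sigma>_def by simp
    next
      case 3 then show ?thesis using h2[OF that] unfolding \<sigma>_def by simp
    qed
  qed
  show ?thesis using perm inv fprop by blast
qed

type_synonym alet = "int \<times> bool"

definition gtD :: "alet \<Rightarrow> alet \<Rightarrow> bool" where
  "gtD a b = (fst a > fst b)"

definition gtP :: "nat \<Rightarrow> alet \<Rightarrow> alet \<Rightarrow> bool" where
  "gtP k a b = (if fst a = - int k then (if fst b = - int k then False else if fst b > 0 then \<not> snd b else True)
               else if fst b = - int k then (fst a > 0 \<and> snd a) else fst a > fst b)"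

definition relp :: "alet \<Rightarrow> alet \<Rightarrow> bool" where
  "relp a b = ((snd a \<and> \<not> snd b \<longrightarrow> fst a > fst b) \<and> (\<not> snd a \<and> snd b \<longrightarrow> fst a < fst b))"

definition cls :: "alet \<Rightarrow> bool" where
  "cls a = (fst a > 0 \<and> snd a)"

abbreviation kap :: "nat \<Rightarrow> alet" where
  "kap k \<equiv> (- int k, False)"

lemma pair_types:
  fixes k :: nat
  assumes k: "k > 0"
    and l: "\<And>a. l = Some a \<Longrightarrow> fst a > - int k"
    and r: "\<And>b. r = Some b \<Longrightarrow> fst b > - int k"
    and rl: "\<And>a b. l = Some a \<Longrightarrow> r = Some b \<Longrightarrow> fst a > 0 \<Longrightarrow> fst b > 0 \<Longrightarrow> relp a b"
  defines "D1 \<equiv> of_bool (optR gtD l (Some (kap k))) + of_bool (optR gtD (Some (kap k)) r) - of_bool (optR gtD l r) :: int"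
    and "D2 \<equiv> of_bool (optR (gtP k) l (Some (kap k))) + of_bool (optR (gtP k) (Some (kap k)) r) - of_bool (optR (gtP k) l r) :: int"
    and "cll \<equiv> (case l of None \<Rightarrow> True | Some a \<Rightarrow> cls a)"
    and "clr \<equiv> (case r of None \<Rightarrow> True | Some a \<Rightarrow> cls a)"
  shows "(cll \<and> \<not> clr \<longrightarrow> D1 = 0 \<and> D2 = 1) \<and> (\<not> cll \<and> clr \<longrightarrow> D1 = 1 \<and> D2 = 0) \<and> (cll = clr \<longrightarrow> D1 = D2)"
proof (cases l)
  case None
  show ?thesis
  proof (cases r)
    case None2: None
    then show ?thesis using None unfolding D1_def D2_def cll_def clr_def by simp
  next
    case (Some b)
    obtain b1 b2 where "b = (b1, b2)" by force
    then show ?thesis using None Some r[OF Some] k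
      unfolding D1_def D2_def cll_def clr_def gtD_def gtP_def cls_def by auto
  qed
next
  case (Some a)
  note la = Some
  obtain a1 a2 where a: "a = (a1, a2)" by force
  show ?thesis
  proof (cases r)
    case None
    then show ?thesis using la a l[OF la] k
      unfolding D1_def D2_def cll_def clr_def gtD_def gtP_def cls_def by auto
  next
    case (Some b)
    note rb = Some
    obtain b1 b2 where b: "b = (b1, b2)" by force
    have rr: "a1 > 0 \<Longrightarrow> b1 > 0 \<Longrightarrow> relp (a1, a2) (b1, b2)" using rl[OF la rb] a b by simp
    have a1: "a1 \<noteq> - int k" using l[OF la] a by simp
    have b1: "b1 \<noteq> - int k" using r[OF rb] b by simp
    have a1': "a1 > - int k" using l[OF la] a by simp
    have b1': "b1 > - int k" using r[OF rb] b by simp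
    have kk: "- int k < 0" using k by simp
    show ?thesis unfolding D1_def D2_def cll_def clr_def la rb a b
      apply (simp only: optR.simps option.case gtD_def gtP_def cls_def fst_conv snd_conv a1 b1 if_False if_True)
      using rr kk a1' b1' unfolding relp_def fst_conv snd_conv
      by (cases a2; cases b2; cases "a1 > 0"; cases "b1 > 0") auto
  qed
qed

lemma sigma_ann:
  fixes k :: nat and u :: "alet list"
  assumes k: "k > 0" and nk: "\<forall>a\<in>set u. fst a > - int k"
    and rl: "\<forall>i. Suc i < length u \<longrightarrow> fst (u ! i) > 0 \<longrightarrow> fst (u ! Suc i) > 0 \<longrightarrow> relp (u ! i) (u ! Suc i)"
  shows "\<exists>\<sigma>. \<sigma> permutes {..<length u + 1} \<and> (\<forall>s. \<sigma> (\<sigma> s) = s) \<and>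
     (\<forall>s<length u + 1. dl gtD (kap k) None u (\<sigma> s) = dl (gtP k) (kap k) None u s \<and>
                       dl (gtP k) (kap k) None u (\<sigma> s) = dl gtD (kap k) None u s)"
proof -
  define N where "N = length u + 1"
  define q where "q s = (if s = 0 then True else if s \<le> length u then cls (u ! (s - 1)) else True)" for s
  define X where "X = {s. s < N \<and> q s \<and> \<not> q (Suc s)}"
  define Y where "Y = {s. s < N \<and> \<not> q s \<and> q (Suc s)}"
  have c: "card X = card Y"
    using card_trans[of N q] unfolding X_def Y_def by (simp add: q_def N_def)
  have key: "(q s \<and> \<not> q (Suc s) \<longrightarrow> dl gtD (kap k) None u s = 0 \<and> dl (gtP k) (kap k) None u s = 1) \<and>
             (\<not> q s \<and> q (Suc s) \<longrightarrow> dl gtD (kap k) None u s = 1 \<and> dl (gtP k) (kap k) None u s = 0) \<and>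
             (q s = q (Suc s) \<longrightarrow> dl gtD (kap k) None u s = dl (gtP k) (kap k) None u s)"
    if s: "s < N" for s
  proof -
    define l where "l = (if s = 0 then None else Some (u ! (s - 1)))"
    define r where "r = (if s < length u then Some (u ! s) else None)"
    have ql: "q s = (case l of None \<Rightarrow> True | Some a \<Rightarrow> cls a)"
      using s unfolding q_def l_def N_def by auto
    have qr: "q (Suc s) = (case r of None \<Rightarrow> True | Some a \<Rightarrow> cls a)"
      using s unfolding q_def r_def N_def by auto
    have dls: "dl R (kap k) None u s = of_bool (optR R l (Some (kap k))) + of_bool (optR R (Some (kap k)) r) - of_bool (optR R l r)" for R
      unfolding dl_def l_def r_def by simp
    have hl: "fst a > - int k" if "l = Some a" for a
      using that nk s unfolding l_def N_def by (auto split: if_splits)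
    have hr: "fst b > - int k" if "r = Some b" for b
      using that nk s unfolding r_def by (auto split: if_splits)
    have hlr: "relp a b" if "l = Some a" "r = Some b" "fst a > 0" "fst b > 0" for a b
    proof -
      have s0: "s \<noteq> 0" "s < length u" using that unfolding l_def r_def by (auto split: if_splits)
      then have "a = u ! (s - 1)" "b = u ! Suc (s - 1)" using that unfolding l_def r_def by auto
      then show ?thesis using rl[rule_format, of "s - 1"] s0 that by auto
    qed
    show ?thesis unfolding ql qr dls using pair_types[OF k hl hr hlr] by blast
  qed
  have X: "X \<subseteq> {..<N}" and Y: "Y \<subseteq> {..<N}" and XY: "X \<inter> Y = {}" unfolding X_def Y_def by auto
  obtain \<sigma> where "\<sigma> permutes {..<N}" "\<forall>s. \<sigma> (\<sigma> s) = s"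
    "\<forall>s<N. dl gtD (kap k) None u (\<sigma> s) = dl (gtP k) (kap k) None u s \<and>
           dl (gtP k) (kap k) None u (\<sigma> s) = dl gtD (kap k) None u s"
    using exists_sigma[OF X Y XY c, of "dl gtD (kap k) None u" "dl (gtP k) (kap k) None u"] key
    unfolding X_def Y_def by auto
  then show ?thesis unfolding N_def by blast
qed

lemma gtD_irr: "\<not> gtD a a" by (simp add: gtD_def)
lemma gtP_kap: "\<not> gtP k (kap k) (kap k)" by (simp add: gtP_def)

lemma phi_stats:
  fixes k :: nat and u :: "alet list"
  assumes nk: "\<forall>a\<in>set u. fst a \<noteq> - int k"
    and sig: "\<sigma> permutes {..<length u + 1}"
    "\<forall>s. \<sigma> (\<sigma> s) = s"
    "\<forall>s<length u + 1. dl gtD (kap k) None u (\<sigma> s) = dl (gtP k) (kap k) None u s \<and>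
                       dl (gtP k) (kap k) None u (\<sigma> s) = dl gtD (kap k) None u s"
    and g: "length g = length u + 1"
  defines "g' \<equiv> map (\<lambda>s. g ! \<sigma> s) [0..<length u + 1]"
  shows "cnt gtD (build (kap k) u g') = cnt (gtP k) (build (kap k) u g)"
    "cnt (gtP k) (build (kap k) u g') = cnt gtD (build (kap k) u g)"
proof -
  have lg': "length g' = length u + 1" unfolding g'_def by simp
  have uu: "cntp gtD None u = cntp (gtP k) None u"
    by (rule cntp_cong) (use nk in \<open>auto simp: gtD_def gtP_def\<close>)
  have g'n: "g' ! s = g ! \<sigma> s" if "s < length u + 1" for s
    using that unfolding g'_def by (simp del: upt_Suc)
  have S: "(\<Sum>s<length u + 1. if 0 < g' ! s then F1 s else 0) =
           (\<Sum>s<length u + 1. if 0 < g ! s then F2 s else 0)"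
    if F: "\<forall>s<length u + 1. F1 (\<sigma> s) = F2 s" for F1 F2 :: "nat \<Rightarrow> int"
  proof -
    have "(\<Sum>s<length u + 1. if 0 < g' ! s then F1 s else 0) =
          (\<Sum>s<length u + 1. if 0 < g ! \<sigma> s then F1 s else 0)"
      by (rule sum.cong) (auto simp: g'n)
    also have "\<dots> = (\<Sum>s<length u + 1. if 0 < g ! \<sigma> (\<sigma> s) then F1 (\<sigma> s) else 0)"
      using sum.permute[OF sig(1), of "\<lambda>s. if 0 < g ! \<sigma> s then F1 s else 0"] by (simp add: comp_def)
    also have "\<dots> = (\<Sum>s<length u + 1. if 0 < g ! s then F2 s else 0)"
    proof (rule sum.cong)
      fix s assume "s \<in> {..<length u + 1}"
      moreover have "\<sigma> (\<sigma> s) = s" using sig(2) by blast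
      ultimately show "(if 0 < g ! \<sigma> (\<sigma> s) then F1 (\<sigma> s) else 0) = (if 0 < g ! s then F2 s else 0)"
        using F by auto
    qed simp
    finally show ?thesis .
  qed
  have "int (cnt gtD (build (kap k) u g')) = int (cnt (gtP k) (build (kap k) u g))"
    unfolding cnt_def slot_formula[where R=gtD, OF gtD_irr lg'] slot_formula[where R="gtP k", OF gtP_kap g] uu
    using S[of "dl gtD (kap k) None u" "dl (gtP k) (kap k) None u"] sig(3) by simp
  then show "cnt gtD (build (kap k) u g') = cnt (gtP k) (build (kap k) u g)" by simp
  have "int (cnt (gtP k) (build (kap k) u g')) = int (cnt gtD (build (kap k) u g))"
    unfolding cnt_def slot_formula[where R=gtD, OF gtD_irr g] slot_formula[where R="gtP k", OF gtP_kap lg'] uu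
    using S[of "dl (gtP k) (kap k) None u" "dl gtD (kap k) None u"] sig(3) by simp
  then show "cnt (gtP k) (build (kap k) u g') = cnt gtD (build (kap k) u g)" by simp
qed

fun hf :: "'a set \<Rightarrow> ('a \<Rightarrow> 'a) \<Rightarrow> 'a list \<Rightarrow> 'a list \<Rightarrow> 'a list" where
  "hf A f buf [] = map f buf"
| "hf A f buf (x # w) = (if x \<in> A then hf A f (x # buf) w else map f buf @ x # hf A f [] w)"

lemma hf_app: "set xs \<subseteq> A \<Longrightarrow> hf A f c (xs @ w) = hf A f (rev xs @ c) w"
  by (induction xs arbitrary: c) auto

lemma hf_buf: "set buf \<subseteq> A \<Longrightarrow> hf A f buf w = hf A f [] (rev buf @ w)"
  using hf_app[of "rev buf" A f "[]" w] by simp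

lemma hf_invol:
  assumes fA: "\<And>a. a \<in> A \<Longrightarrow> f a \<in> A" and ff: "\<And>a. a \<in> A \<Longrightarrow> f (f a) = a"
  shows "hf A f [] (hf A f [] w) = w"
proof (induction "length w" arbitrary: w rule: less_induct)
  case less
  define F where "F = takeWhile (\<lambda>x. x \<in> A) w"
  define rest where "rest = dropWhile (\<lambda>x. x \<in> A) w"
  have w: "w = F @ rest" unfolding F_def rest_def by simp
  have FA: "set F \<subseteq> A" unfolding F_def by (auto dest: set_takeWhileD)
  have mfA: "set (map f (rev F)) \<subseteq> A" using FA fA by auto
  have mm: "map f (rev (map f (rev F))) = F"
    using FA ff by (induction F) auto
  show ?case
  proof (cases rest)
    case Nil
    have "hf A f [] w = map f (rev F)" using w Nil hf_app[OF FA, of f "[]" "[]"] by simp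
    then have "hf A f [] (hf A f [] w) = hf A f (rev (map f (rev F))) []"
      using hf_app[OF mfA, of f "[]" "[]"] by simp
    also have "\<dots> = F" using mm by simp
    finally show ?thesis using w Nil by simp
  next
    case (Cons x r)
    have xA: "x \<notin> A" using Cons unfolding rest_def
      using hd_dropWhile[of "\<lambda>x. x \<in> A" w] by auto
    have "hf A f [] w = map f (rev F) @ x # hf A f [] r"
      using w Cons hf_app[OF FA, of f "[]" "x # r"] xA by simp
    then have "hf A f [] (hf A f [] w) = hf A f (rev (map f (rev F))) (x # hf A f [] r)"
      using hf_app[OF mfA, of f "[]"] by simp
    also have "\<dots> = F @ x # hf A f [] (hf A f [] r)" using mm xA by simp
    also have "hf A f [] (hf A f [] r) = r"
      by (rule less) (simp add: w Cons)
    finally show ?thesis using w Cons by simp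
  qed
qed

lemma length_hf: "length (hf A f buf w) = length buf + length w"
  by (induction w arbitrary: buf) auto

lemma filter_hf:
  assumes "\<And>a. a \<in> A \<Longrightarrow> \<not> P a" "\<And>a. a \<in> A \<Longrightarrow> f a \<in> A"
  shows "set buf \<subseteq> A \<Longrightarrow> filter P (hf A f buf w) = filter P w"
proof (induction w arbitrary: buf)
  case Nil
  then show ?case using assms by (induction buf) auto
next
  case (Cons x w)
  have fb: "filter P (map f buf) = []" using Cons.prems assms by (induction buf) auto
  show ?case using Cons fb assms(1) by auto
qed

lemma mset_hf:
  "set buf \<subseteq> A \<Longrightarrow> mset (hf A f buf w) =
     image_mset f (mset buf) + image_mset (\<lambda>x. if x \<in> A then f x else x) (mset w)"
proof (induction w arbitrary: buf)
  case Nil then show ?case by simp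
next
  case (Cons x w)
  show ?case
  proof (cases "x \<in> A")
    case True then show ?thesis using Cons by auto
  next
    case False then show ?thesis using Cons.IH[of "[]"] Cons.prems by auto
  qed
qed

lemma cntp_Cons': "cntp R p (y # l) = (if optR R p (Some y) then 1 else 0) + cnt R (y # l)"
  by (simp add: cnt_def)

lemma cnt_snoc': "l \<noteq> [] \<Longrightarrow> cnt R (l @ [x]) = cnt R l + (if R (last l) x then 1 else 0)"
  unfolding cnt_def cntp_snoc by simp

lemma hf_L0:
  assumes revR: "\<And>a b. a \<in> A \<Longrightarrow> b \<in> A \<Longrightarrow> R (f a) (f b) = R b a"
    and bA: "set buf \<subseteq> A"
  shows "cnt R (map f buf) = cnt R (rev buf)"
proof -
  have "cnt R (map f buf) = cnt (\<lambda>a b. R (f a) (f b)) buf"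
    using cntp_map[of R f None buf] by (simp add: cnt_def)
  also have "\<dots> = cnt (\<lambda>a b. R b a) buf"
    unfolding cnt_def by (rule cntp_cong) (use bA revR in auto)
  also have "\<dots> = cnt R (rev buf)" by (simp add: cnt_rev)
  finally show ?thesis .
qed

lemma hf_L:
  assumes unif: "\<And>y a a'. y \<notin> A \<Longrightarrow> a \<in> A \<Longrightarrow> a' \<in> A \<Longrightarrow> R y a = R y a' \<and> R a y = R a' y"
    and revR: "\<And>a b. a \<in> A \<Longrightarrow> b \<in> A \<Longrightarrow> R (f a) (f b) = R b a"
    and fA: "\<And>a. a \<in> A \<Longrightarrow> f a \<in> A"
    and pA: "\<forall>y. p = Some y \<longrightarrow> y \<notin> A" and bA: "set buf \<subseteq> A"
    and ys: "ys = [] \<or> (\<exists>x. ys = [x] \<and> x \<notin> A)"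
  shows "cntp R p (map f buf @ ys) = cntp R p (rev buf @ ys)"
proof (cases buf)
  case Nil then show ?thesis by simp
next
  case (Cons b bs)
  obtain c cs where mc: "map f buf = c # cs" using Cons by auto
  obtain d ds where rd: "rev buf = d # ds" using Cons by (cases "rev buf") auto
  have cA: "c \<in> A" using mc bA fA Cons by auto
  have "d \<in> set (rev buf)" using rd by simp
  then have dA: "d \<in> A" using bA by auto
  have hd: "optR R p (Some c) = optR R p (Some d)"
  proof (cases p)
    case None then show ?thesis by simp
  next
    case (Some y)
    then have "y \<notin> A" using pA by simp
    then show ?thesis using unif[of y c d] cA dA Some by simp
  qed
  have "last buf \<in> set buf" using Cons by simp
  then have lA: "last (map f buf) \<in> A" using bA fA Cons by (auto simp: last_map)
  have lA': "last (rev buf) \<in> A" using bA Cons by simp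
  have L0: "cnt R (map f buf) = cnt R (rev buf)" by (rule hf_L0[where R=R and A=A and f=f, OF revR bA])
  have cm: "cnt R (map f buf @ ys) = cnt R (rev buf @ ys)"
    using ys
  proof
    assume "ys = []" then show ?thesis using L0 by simp
  next
    assume "\<exists>x. ys = [x] \<and> x \<notin> A"
    then obtain x where x: "ys = [x]" "x \<notin> A" by blast
    have e: "R (last (map f buf)) x = R (last (rev buf)) x" using unif[OF x(2) lA lA'] by simp
    have "cnt R (map f buf @ [x]) = cnt R (map f buf) + (if R (last (map f buf)) x then 1 else 0)"
      by (rule cnt_snoc') (use Cons in simp)
    moreover have "cnt R (rev buf @ [x]) = cnt R (rev buf) + (if R (last (rev buf)) x then 1 else 0)"
      by (rule cnt_snoc') (use Cons in simp)
    ultimately show ?thesis using x L0 e by simp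
  qed
  have "cntp R p (map f buf @ ys) = (if optR R p (Some c) then 1 else 0) + cnt R (map f buf @ ys)"
    unfolding mc using cntp_Cons'[of R p c "cs @ ys"] by simp
  moreover have "cntp R p (rev buf @ ys) = (if optR R p (Some d) then 1 else 0) + cnt R (rev buf @ ys)"
    unfolding rd using cntp_Cons'[of R p d "ds @ ys"] by simp
  ultimately show ?thesis using cm hd by simp
qed

lemma hf_cnt:
  assumes unif: "\<And>y a a'. y \<notin> A \<Longrightarrow> a \<in> A \<Longrightarrow> a' \<in> A \<Longrightarrow> R y a = R y a' \<and> R a y = R a' y"
    and revR: "\<And>a b. a \<in> A \<Longrightarrow> b \<in> A \<Longrightarrow> R (f a) (f b) = R b a"
    and fA: "\<And>a. a \<in> A \<Longrightarrow> f a \<in> A"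
  shows "(\<forall>y. p = Some y \<longrightarrow> y \<notin> A) \<Longrightarrow> set buf \<subseteq> A \<Longrightarrow> cntp R p (hf A f buf w) = cntp R p (rev buf @ w)"
proof (induction w arbitrary: p buf)
  case Nil then show ?case using hf_L[where R=R and A=A and f=f and p=p and buf=buf and ys="[]", OF unif revR fA] by simp
next
  case (Cons x w)
  show ?case
  proof (cases "x \<in> A")
    case True then show ?thesis using Cons by simp
  next
    case False
    have "cntp R p (hf A f buf (x # w)) = cntp R p (map f buf @ [x]) + cntp R (Some x) (hf A f [] w)"
      using False cntp_append[of R p "map f buf" x "hf A f [] w"] by simp
    also have "cntp R (Some x) (hf A f [] w) = cntp R (Some x) w"
      using Cons.IH[of "Some x" "[]"] False by simp
    also have "cntp R p (map f buf @ [x]) = cntp R p (rev buf @ [x])"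
      using hf_L[where R=R and A=A and f=f and p=p and buf=buf and ys="[x]", OF unif revR fA] Cons.prems False by simp
    finally show ?thesis using cntp_append[of R p "rev buf" x w] by simp
  qed
qed

fun annot :: "nat \<Rightarrow> int list \<Rightarrow> alet list" where
  "annot t [] = []"
| "annot t (x # w) = (if x > 0 then (x, x > int t + 1) # annot (t + 1) w else (x, False) # annot t w)"

definition ann :: "int list \<Rightarrow> alet list" where "ann w = annot 0 w"

fun annp :: "nat \<Rightarrow> int list \<Rightarrow> alet list" where
  "annp t [] = []"
| "annp t (x # xs) = (x, x > int t + 1) # annp (t + 1) xs"

lemma map_fst_annot: "map fst (annot t w) = w"
  by (induction w arbitrary: t) auto

lemma annot_replicate: "\<kappa> \<le> 0 \<Longrightarrow> annot t (replicate a \<kappa> @ w) = replicate a (\<kappa>, False) @ annot t w"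
  by (induction a) auto

lemma annot_build: "\<kappa> \<le> 0 \<Longrightarrow> annot t (build \<kappa> u g) = build (\<kappa>, False) (annot t u) g"
proof (induction u arbitrary: t g)
  case Nil then show ?case using annot_replicate[of \<kappa> t "hd g" "[]"] by simp
next
  case (Cons x u) then show ?case using annot_replicate[of \<kappa> t "hd g"] by auto
qed

lemma filter_annot: "filter (\<lambda>a. fst a > 0) (annot t w) = annp t (filter (\<lambda>x. x > 0) w)"
  by (induction w arbitrary: t) auto

lemma filter_annot_neq: "\<kappa> \<le> 0 \<Longrightarrow> annot t (filter (\<lambda>x. x \<noteq> \<kappa>) w) = filter (\<lambda>a. a \<noteq> (\<kappa>, False)) (annot t w)"
  by (induction w arbitrary: t) auto

lemma successively_annp:
  "(\<forall>j<length D. D ! j \<noteq> int t + int j + 1) \<Longrightarrow> successively relp (annp t D)"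
proof (induction D arbitrary: t)
  case Nil then show ?case by simp
next
  case (Cons x D)
  have "D ! j \<noteq> int (t + 1) + int j + 1" if "j < length D" for j
    using Cons.prems[rule_format, of "Suc j"] that by simp
  then have IH: "successively relp (annp (t + 1) D)"
    by (intro Cons.IH) auto
  show ?case
  proof (cases D)
    case Nil then show ?thesis by simp
  next
    case (Cons y E)
    have "y \<noteq> int t + 2" using Cons.prems[rule_format, of 1] Cons by simp
    then have "relp (x, x > int t + 1) (y, y > int (t + 1) + 1)"
      unfolding relp_def by auto
    then show ?thesis using IH Cons by simp
  qed
qed

lemma successively_filter_adj:
  assumes "successively R (filter P xs)" "Suc i < length xs" "P (xs ! i)" "P (xs ! Suc i)"
  shows "R (xs ! i) (xs ! Suc i)"
proof -
  have d1: "drop i xs = xs ! i # drop (Suc i) xs" using assms(2) Cons_nth_drop_Suc[of i xs] by simp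
  have d2: "drop (Suc i) xs = xs ! Suc i # drop (Suc (Suc i)) xs" using assms(2) Cons_nth_drop_Suc[of "Suc i" xs] by simp
  have xs: "xs = take i xs @ [xs ! i, xs ! Suc i] @ drop (Suc (Suc i)) xs"
    using append_take_drop_id[of i xs] d1 d2 by simp
  have "filter P xs = filter P (take i xs) @ [xs ! i, xs ! Suc i] @ filter P (drop (Suc (Suc i)) xs)"
    by (subst xs) (simp add: assms(3,4))
  then have "successively R (filter P (take i xs) @ [xs ! i, xs ! Suc i] @ filter P (drop (Suc (Suc i)) xs))"
    using assms(1) by simp
  then show ?thesis by (simp add: successively_append_iff)
qed

definition der_list :: "int list \<Rightarrow> bool" where
  "der_list D \<longleftrightarrow> distinct D \<and> set D = {1..int (length D)} \<and> (\<forall>j<length D. D ! j \<noteq> int j + 1)"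

definition Wd :: "nat \<Rightarrow> nat \<Rightarrow> nat list \<Rightarrow> int list set" where
  "Wd n k m = {w. length w = n \<and> (\<forall>x\<in>set w. x \<noteq> 0 \<and> - int k \<le> x) \<and> der_list (Pos w) \<and>
                 (\<forall>i\<in>{1..k}. count (mset w) (- int i) = m ! (i - 1))}"

definition desW :: "nat \<Rightarrow> int list \<Rightarrow> nat" where
  "desW k w = cnt (gtP k) (ann w)"

lemma des_word_ann: "des_word w = cnt gtD (ann w)"
proof -
  have "cnt (\<lambda>a b. a > b) (map fst (ann w)) = cnt (\<lambda>a b. fst a > fst b) (ann w)"
    using cntp_map[of "\<lambda>a b. a > b" fst None "ann w"] by (simp add: cnt_def)
  then show ?thesis
    by (simp add: des_word_cnt ann_def map_fst_annot gtD_def[abs_def])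
qed

definition sig_ok :: "nat \<Rightarrow> alet list \<Rightarrow> (nat \<Rightarrow> nat) \<Rightarrow> bool" where
  "sig_ok k u \<sigma> \<longleftrightarrow> \<sigma> permutes {..<length u + 1} \<and> (\<forall>s. \<sigma> (\<sigma> s) = s) \<and>
     (\<forall>s<length u + 1. dl gtD (kap k) None u (\<sigma> s) = dl (gtP k) (kap k) None u s \<and>
                       dl (gtP k) (kap k) None u (\<sigma> s) = dl gtD (kap k) None u s)"

definition phiW :: "nat \<Rightarrow> int list \<Rightarrow> int list" where
  "phiW k w = (let u = filter (\<lambda>x. x \<noteq> - int k) w; g = gaps (- int k) w;
                   \<sigma> = (SOME \<sigma>. sig_ok k (ann u) \<sigma>)
               in build (- int k) u (map (\<lambda>s. g ! \<sigma> s) [0..<length u + 1]))"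

lemma sum_list_perm:
  fixes g :: "nat list"
  assumes "\<sigma> permutes {..<length g}"
  shows "sum_list (map (\<lambda>s. g ! \<sigma> s) [0..<length g]) = sum_list g"
proof -
  have "sum_list (map (\<lambda>s. g ! \<sigma> s) [0..<length g]) = (\<Sum>s<length g. g ! \<sigma> s)"
    by (simp add: sum_list_sum_nth atLeast0LessThan)
  also have "\<dots> = (\<Sum>s<length g. g ! s)"
    using sum.permute[OF assms, of "\<lambda>s. g ! s"] by (simp add: comp_def)
  also have "\<dots> = sum_list g" by (simp add: sum_list_sum_nth atLeast0LessThan)
  finally show ?thesis .
qed

lemma phiW_props:
  assumes k: "k > 0" and w: "w \<in> Wd n k m"
  shows "phiW k w \<in> Wd n k m" "phiW k (phiW k w) = w"
    "des_word (phiW k w) = desW k w" "desW k (phiW k w) = des_word w" "Pos (phiW k w) = Pos w"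
proof -
  define \<kappa> where "\<kappa> = - int k"
  have \<kappa>0: "\<kappa> \<le> 0" unfolding \<kappa>_def by simp
  define u where "u = filter (\<lambda>x. x \<noteq> \<kappa>) w"
  define g where "g = gaps \<kappa> w"
  define \<sigma> where "\<sigma> = (SOME \<sigma>. sig_ok k (ann u) \<sigma>)"
  define g' where "g' = map (\<lambda>s. g ! \<sigma> s) [0..<length u + 1]"
  have phi: "phiW k w = build \<kappa> u g'"
    unfolding phiW_def g'_def \<sigma>_def g_def u_def \<kappa>_def Let_def by simp
  have wb: "w = build \<kappa> u g" unfolding u_def g_def by (simp add: build_gaps)
  have lg: "length g = length u + 1" unfolding g_def u_def by (simp add: length_gaps)
  have lg': "length g' = length u + 1" unfolding g'_def by simp
  have ku: "\<kappa> \<notin> set u" unfolding u_def by simp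
  have wset: "\<forall>x\<in>set w. x \<noteq> 0 \<and> - int k \<le> x" and der: "der_list (Pos w)"
    using w unfolding Wd_def by auto
  have posu: "filter (\<lambda>x. x > 0) u = Pos w"
    unfolding u_def Pos_def \<kappa>_def by (auto simp: filter_filter intro!: filter_cong)
  have au_set: "\<forall>a\<in>set (ann u). fst a > - int k"
  proof
    fix a assume "a \<in> set (ann u)"
    then have "fst a \<in> set (map fst (ann u))" by auto
    then have "fst a \<in> set u" by (simp add: ann_def map_fst_annot)
    then show "fst a > - int k" using wset unfolding u_def \<kappa>_def by force
  qed
  have succ: "successively relp (filter (\<lambda>a. fst a > 0) (ann u))"
    unfolding ann_def filter_annot posu
    using successively_annp[of "Pos w" 0] der unfolding der_list_def by simp
  have rl: "\<forall>i. Suc i < length (ann u) \<longrightarrow> fst (ann u ! i) > 0 \<longrightarrow> fst (ann u ! Suc i) > 0 \<longrightarrow>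
      relp (ann u ! i) (ann u ! Suc i)"
    using successively_filter_adj[OF succ] by blast
  have lau: "length (ann u) = length u"
    by (metis ann_def length_map map_fst_annot)
  have "\<exists>\<sigma>. sig_ok k (ann u) \<sigma>"
    using sigma_ann[OF k au_set rl] unfolding sig_ok_def by blast
  then have sok: "sig_ok k (ann u) \<sigma>" unfolding \<sigma>_def by (rule someI_ex)
  then have sperm: "\<sigma> permutes {..<length u + 1}" and sinv: "\<forall>s. \<sigma> (\<sigma> s) = s"
    unfolding sig_ok_def lau by auto
  have annw: "ann w = build (kap k) (ann u) g"
    unfolding ann_def using annot_build[OF \<kappa>0, of 0 u g] wb \<kappa>_def by simp
  have annp: "ann (phiW k w) = build (kap k) (ann u) g'"
    unfolding ann_def phi using annot_build[OF \<kappa>0, of 0 u g'] \<kappa>_def by simp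
  have nk: "\<forall>a\<in>set (ann u). fst a \<noteq> - int k" using au_set by force
  have g'def: "g' = map (\<lambda>s. g ! \<sigma> s) [0..<length (ann u) + 1]" unfolding g'_def lau ..
  note st = phi_stats[OF nk, of \<sigma> g, folded g'def]
  have sok': "\<sigma> permutes {..<length (ann u) + 1}" "\<forall>s. \<sigma> (\<sigma> s) = s"
    "\<forall>s<length (ann u) + 1. dl gtD (kap k) None (ann u) (\<sigma> s) = dl (gtP k) (kap k) None (ann u) s \<and>
        dl (gtP k) (kap k) None (ann u) (\<sigma> s) = dl gtD (kap k) None (ann u) s"
    using sok unfolding sig_ok_def by auto
  have lg2: "length g = length (ann u) + 1" using lg lau by simp
  show "des_word (phiW k w) = desW k w"
    unfolding des_word_ann desW_def annp annw using st(1)[OF sok' lg2] .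
  show "desW k (phiW k w) = des_word w"
    unfolding des_word_ann desW_def annp annw using st(2)[OF sok' lg2] .
  have posp: "Pos (phiW k w) = Pos w"
    unfolding phi Pos_def using filter_build_other[of "\<lambda>x. x > 0" \<kappa> u g'] \<kappa>0 wb
      filter_build_other[of "\<lambda>x. x > 0" \<kappa> u g] by simp
  then show "Pos (phiW k w) = Pos w" .
  have sg: "sum_list g' = sum_list g"
    unfolding g'_def using sum_list_perm[of \<sigma> g] sperm lg by simp
  have ms: "mset (phiW k w) = mset w"
    unfolding phi using mset_build[OF lg', of \<kappa>] mset_build[OF lg, of \<kappa>] wb sg by simp
  have len: "length (phiW k w) = length w"
    unfolding phi using length_build[OF lg', of \<kappa>] length_build[OF lg, of \<kappa>] wb sg by simp
  have st: "set (phiW k w) = set w" using ms by (metis set_mset_mset)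
  show "phiW k w \<in> Wd n k m"
    using w len st ms posp unfolding Wd_def by simp
  have fu: "filter (\<lambda>x. x \<noteq> - int k) (phiW k w) = u"
    unfolding phi using filter_build[OF ku] \<kappa>_def by simp
  have gg: "gaps (- int k) (phiW k w) = g'"
    unfolding phi using gaps_build[OF ku lg'] \<kappa>_def by simp
  have g'': "map (\<lambda>s. g' ! \<sigma> s) [0..<length u + 1] = g"
  proof (rule nth_equalityI)
    show "length (map (\<lambda>s. g' ! \<sigma> s) [0..<length u + 1]) = length g" using lg by simp
  next
    fix i assume "i < length (map (\<lambda>s. g' ! \<sigma> s) [0..<length u + 1])"
    then have i: "i < length u + 1" by simp
    have "\<sigma> i < length u + 1" using permutes_in_image[OF sperm] i by simp
    then have "g' ! \<sigma> i = g ! \<sigma> (\<sigma> i)" unfolding g'_def by (simp del: upt_Suc)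
    then show "map (\<lambda>s. g' ! \<sigma> s) [0..<length u + 1] ! i = g ! i"
      using i sinv by (simp del: upt_Suc)
  qed
  show "phiW k (phiW k w) = w"
    unfolding phiW_def[of k "phiW k w"] Let_def fu gg using g'' wb
    unfolding \<sigma>_def[symmetric] \<kappa>_def by simp
qed

definition swc :: "nat \<Rightarrow> int \<Rightarrow> int" where
  "swc c x = (if x = - int c then - int c - 1 else if x = - int c - 1 then - int c else x)"

definition cswap :: "nat \<Rightarrow> int list \<Rightarrow> int list" where
  "cswap c w = hf {- int c, - int c - 1} (swc c) [] w"

definition Aa :: "nat \<Rightarrow> alet set" where
  "Aa c = {a. fst a = - int c \<or> fst a = - int c - 1}"

definition swa :: "nat \<Rightarrow> alet \<Rightarrow> alet" where
  "swa c a = (swc c (fst a), snd a)"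

lemma annot_nonpos: "\<forall>x\<in>set l. x \<le> 0 \<Longrightarrow> annot t (l @ r) = map (\<lambda>x. (x, False)) l @ annot t r"
  by (induction l) auto

lemma swc_neg: "c \<ge> 1 \<Longrightarrow> x \<in> {- int c, - int c - 1} \<Longrightarrow> swc c x \<le> 0"
  unfolding swc_def by auto

lemma annot_hf:
  assumes c: "c \<ge> 1"
  shows "set buf \<subseteq> {- int c, - int c - 1} \<Longrightarrow>
    annot t (hf {- int c, - int c - 1} (swc c) buf w) = hf (Aa c) (swa c) (map (\<lambda>x. (x, False)) buf) (annot t w)"
proof (induction w arbitrary: t buf)
  case Nil
  have "\<forall>x\<in>set (map (swc c) buf). x \<le> 0" using Nil swc_neg[OF c] by auto
  then show ?case using annot_nonpos[of "map (swc c) buf" t "[]"] by (simp add: swa_def)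
next
  case (Cons x w)
  show ?case
  proof (cases "x \<in> {- int c, - int c - 1}")
    case True
    then have "x \<le> 0" using c by auto
    moreover have "(x, False) \<in> Aa c" using True by (auto simp: Aa_def)
    ultimately show ?thesis using Cons True by simp
  next
    case False
    have np: "\<forall>y\<in>set (map (swc c) buf). y \<le> 0" using Cons.prems swc_neg[OF c] by auto
    have e1: "annot t (hf {- int c, - int c - 1} (swc c) buf (x # w)) =
       map (\<lambda>y. (y, False)) (map (swc c) buf) @ annot t (x # hf {- int c, - int c - 1} (swc c) [] w)"
      using False annot_nonpos[OF np] by simp
    have nA: "(x, b) \<notin> Aa c" for b using False by (simp add: Aa_def)
    show ?thesis
      using e1 nA Cons.IH[of "[]"] by (auto simp: swa_def)
  qed
qed

lemma count_map_invol:
  assumes gg: "\<And>x. g (g x) = x"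
  shows "count (mset (map g w)) y = count (mset w) (g y)"
proof (induction w)
  case Nil then show ?case by simp
next
  case (Cons a w)
  have "(g a = y) = (a = g y)" using gg by metis
  then show ?case using Cons by simp
qed

lemma swc_invol: "swc c (swc c x) = x"
  unfolding swc_def by auto

lemma cswap_props:
  assumes c: "c \<ge> 1" "c + 1 < k" and lm: "length m = k" and w: "w \<in> Wd n k m"
  shows "cswap c w \<in> Wd n k (m[c - 1 := m ! c, c := m ! (c - 1)])" "cswap c (cswap c w) = w"
    "des_word (cswap c w) = des_word w" "desW k (cswap c w) = desW k w" "Pos (cswap c w) = Pos w"
proof -
  define A where "A = {- int c, - int c - 1}"
  have fA: "\<And>a. a \<in> A \<Longrightarrow> swc c a \<in> A" unfolding A_def swc_def by auto
  show "cswap c (cswap c w) = w"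
    unfolding cswap_def A_def[symmetric] by (rule hf_invol) (use fA swc_invol in auto)
  have ann: "ann (cswap c w) = hf (Aa c) (swa c) [] (ann w)"
    unfolding ann_def cswap_def using annot_hf[OF c(1), of "[]" 0 w] by simp
  have fA': "\<And>a. a \<in> Aa c \<Longrightarrow> swa c a \<in> Aa c" unfolding Aa_def swa_def swc_def by auto
  have kc: "- int k \<noteq> - int c" "- int k \<noteq> - int c - 1" using c by auto
  have unifD: "gtD y a = gtD y a' \<and> gtD a y = gtD a' y" if "y \<notin> Aa c" "a \<in> Aa c" "a' \<in> Aa c" for y a a'
    using that unfolding Aa_def gtD_def by auto
  have revD: "gtD (swa c a) (swa c b) = gtD b a" if "a \<in> Aa c" "b \<in> Aa c" for a b
    using that unfolding Aa_def gtD_def swa_def swc_def by auto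
  have unifP: "gtP k y a = gtP k y a' \<and> gtP k a y = gtP k a' y" if "y \<notin> Aa c" "a \<in> Aa c" "a' \<in> Aa c" for y a a'
    using that kc c unfolding Aa_def gtP_def by auto
  have revP: "gtP k (swa c a) (swa c b) = gtP k b a" if "a \<in> Aa c" "b \<in> Aa c" for a b
    using that kc c unfolding Aa_def gtP_def swa_def swc_def by auto
  show "des_word (cswap c w) = des_word w"
    unfolding des_word_ann ann cnt_def
    using hf_cnt[where R=gtD and A="Aa c" and f="swa c" and p=None and buf="[]", OF unifD revD fA'] by simp
  show "desW k (cswap c w) = desW k w"
    unfolding desW_def ann cnt_def
    using hf_cnt[where R="gtP k" and A="Aa c" and f="swa c" and p=None and buf="[]", OF unifP revP fA'] by simp
  have posw: "Pos (cswap c w) = Pos w"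
    unfolding Pos_def cswap_def by (rule filter_hf) (use c in \<open>auto simp: swc_def\<close>)
  then show "Pos (cswap c w) = Pos w" .
  have ms: "mset (cswap c w) = mset (map (swc c) w)"
  proof -
    have "mset (cswap c w) = image_mset (\<lambda>x. if x \<in> A then swc c x else x) (mset w)"
      unfolding cswap_def A_def[symmetric] using mset_hf[of "[]" A "swc c" w] by simp
    also have "\<dots> = image_mset (swc c) (mset w)"
      by (rule image_mset_cong) (auto simp: A_def swc_def)
    finally show ?thesis by simp
  qed
  have len: "length (cswap c w) = length w" unfolding cswap_def by (simp add: length_hf)
  have wprops: "length w = n" "\<forall>x\<in>set w. x \<noteq> 0 \<and> - int k \<le> x" "der_list (Pos w)"
    "\<forall>i\<in>{1..k}. count (mset w) (- int i) = m ! (i - 1)"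
    using w unfolding Wd_def by auto
  have st: "set (cswap c w) = swc c ` set w" using ms by (metis mset_map set_image_mset set_mset_mset)
  have st2: "\<forall>x\<in>set (cswap c w). x \<noteq> 0 \<and> - int k \<le> x"
    using wprops(2) c unfolding st swc_def by auto
  have cnt2: "count (mset (cswap c w)) (- int i) = m[c - 1 := m ! c, c := m ! (c - 1)] ! (i - 1)"
    if i: "i \<in> {1..k}" for i
  proof -
    have cm: "count (mset (cswap c w)) (- int i) = count (mset w) (swc c (- int i))"
      unfolding ms by (rule count_map_invol) (simp add: swc_invol)
    consider "i = c" | "i = c + 1" | "i \<noteq> c" "i \<noteq> c + 1" by blast
    then show ?thesis
    proof cases
      case 1
      then have "swc c (- int i) = - int (c + 1)" unfolding swc_def by simp
      moreover have "count (mset w) (- int (c + 1)) = m ! c"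
        using wprops(4)[rule_format, of "c + 1"] c by simp
      ultimately show ?thesis using c lm 1 cm
        by (auto simp: nth_list_update)
    next
      case 2
      then have "swc c (- int i) = - int c" unfolding swc_def by simp
      moreover have "c \<in> {1..k}" using c by auto
      moreover have "count (mset w) (- int c) = m ! (c - 1)"
        using wprops(4)[rule_format, of c] c by simp
      ultimately show ?thesis using c lm 2 cm
        by (auto simp: nth_list_update)
    next
      case 3
      then have "swc c (- int i) = - int i" unfolding swc_def by auto
      moreover have "i - 1 \<noteq> c - 1" "i - 1 \<noteq> c" using 3 i c by auto
      ultimately show ?thesis using wprops(4) i cm
        by (simp add: nth_list_update)
    qed
  qed
  show "cswap c w \<in> Wd n k (m[c - 1 := m ! c, c := m ! (c - 1)])"
    unfolding Wd_def using len wprops(1,3) st2 posw cnt2 by simp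
qed

definition swp :: "nat list \<Rightarrow> nat list \<Rightarrow> bool" where
  "swp a b \<longleftrightarrow> (\<exists>i. Suc i < length a \<and> b = a[i := a ! Suc i, Suc i := a ! i])"

lemma swp_cons: "swp a b \<Longrightarrow> swp (x # a) (x # b)"
  unfolding swp_def
proof (elim exE conjE)
  fix i assume "Suc i < length a" "b = a[i := a ! Suc i, Suc i := a ! i]"
  then show "\<exists>j. Suc j < length (x # a) \<and> x # b = (x # a)[j := (x # a) ! Suc j, Suc j := (x # a) ! j]"
    by (intro exI[of _ "Suc i"]) simp
qed

lemma swp_cons_rtr: "swp\<^sup>*\<^sup>* a b \<Longrightarrow> swp\<^sup>*\<^sup>* (x # a) (x # b)"
  by (induction rule: rtranclp_induct) (auto intro: rtranclp.rtrancl_into_rtrancl swp_cons)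

lemma swp_move: "swp\<^sup>*\<^sup>* (x # ys1 @ ys2) (ys1 @ x # ys2)"
proof (induction ys1)
  case Nil then show ?case by simp
next
  case (Cons y ys1)
  have "swp (x # y # ys1 @ ys2) (y # x # ys1 @ ys2)"
    unfolding swp_def by (intro exI[of _ 0]) simp
  moreover have "swp\<^sup>*\<^sup>* (y # x # ys1 @ ys2) (y # ys1 @ x # ys2)"
    using swp_cons_rtr[OF Cons.IH] .
  ultimately show ?case by (simp add: converse_rtranclp_into_rtranclp)
qed

lemma swp_connect: "mset xs = mset ys \<Longrightarrow> swp\<^sup>*\<^sup>* xs ys"
proof (induction xs arbitrary: ys)
  case Nil then show ?case by simp
next
  case (Cons x xs)
  have "x \<in> set ys" using Cons.prems by (metis list.set_intros(1) set_mset_mset)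
  then obtain ys1 ys2 where ys: "ys = ys1 @ x # ys2" by (meson split_list)
  have "mset xs = mset (ys1 @ ys2)" using Cons.prems ys by simp
  then have "swp\<^sup>*\<^sup>* xs (ys1 @ ys2)" by (rule Cons.IH)
  then have "swp\<^sup>*\<^sup>* (x # xs) (x # ys1 @ ys2)" by (rule swp_cons_rtr)
  then show ?case using swp_move[of x ys1 ys2] ys by (meson rtranclp_trans)
qed

definition Wrel :: "nat \<Rightarrow> nat \<Rightarrow> nat list \<Rightarrow> nat list \<Rightarrow> bool" where
  "Wrel n k m m' \<longleftrightarrow> (\<exists>F. bij_betw F (Wd n k m) (Wd n k m') \<and>
     (\<forall>w\<in>Wd n k m. des_word (F w) = des_word w \<and> desW k (F w) = desW k w \<and> Pos (F w) = Pos w))"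

lemma Wrel_refl: "Wrel n k m m"
  unfolding Wrel_def by (intro exI[of _ id]) simp

lemma Wrel_trans: "Wrel n k a b \<Longrightarrow> Wrel n k b c \<Longrightarrow> Wrel n k a c"
  unfolding Wrel_def
proof (elim exE conjE)
  fix F G assume F: "bij_betw F (Wd n k a) (Wd n k b)"
    "\<forall>w\<in>Wd n k a. des_word (F w) = des_word w \<and> desW k (F w) = desW k w \<and> Pos (F w) = Pos w"
    and G: "bij_betw G (Wd n k b) (Wd n k c)"
    "\<forall>w\<in>Wd n k b. des_word (G w) = des_word w \<and> desW k (G w) = desW k w \<and> Pos (G w) = Pos w"
  have "bij_betw (G \<circ> F) (Wd n k a) (Wd n k c)" using F(1) G(1) by (rule bij_betw_trans)
  moreover have "\<forall>w\<in>Wd n k a. des_word ((G \<circ> F) w) = des_word w \<and> desW k ((G \<circ> F) w) = desW k w \<and> Pos ((G \<circ> F) w) = Pos w"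
    using F G bij_betwE[OF F(1)] by auto
  ultimately show "\<exists>H. bij_betw H (Wd n k a) (Wd n k c) \<and>
     (\<forall>w\<in>Wd n k a. des_word (H w) = des_word w \<and> desW k (H w) = desW k w \<and> Pos (H w) = Pos w)"
    by blast
qed

lemma Wrel_swap:
  assumes c: "c \<ge> 1" "c + 1 < k" and lm: "length m = k"
  shows "Wrel n k m (m[c - 1 := m ! c, c := m ! (c - 1)])"
proof -
  define m' where "m' = m[c - 1 := m ! c, c := m ! (c - 1)]"
  have lm': "length m' = k" unfolding m'_def using lm by simp
  have mm: "m'[c - 1 := m' ! c, c := m' ! (c - 1)] = m"
    unfolding m'_def using c lm
    by (auto intro!: nth_equalityI simp: nth_list_update)
  have b: "bij_betw (cswap c) (Wd n k m) (Wd n k m')"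
  proof (rule bij_betwI[where g = "cswap c"])
    show "cswap c \<in> Wd n k m \<rightarrow> Wd n k m'" using cswap_props(1)[OF c lm] unfolding m'_def by blast
    show "cswap c \<in> Wd n k m' \<rightarrow> Wd n k m" using cswap_props(1)[OF c lm'] mm by fastforce
    show "\<And>x. x \<in> Wd n k m \<Longrightarrow> cswap c (cswap c x) = x" using cswap_props(2)[OF c lm] by blast
    show "\<And>x. x \<in> Wd n k m' \<Longrightarrow> cswap c (cswap c x) = x" using cswap_props(2)[OF c lm'] by blast
  qed
  show ?thesis unfolding Wrel_def m'_def[symmetric]
    using b cswap_props(3-5)[OF c lm] by blast
qed

lemma Wrel_perm:
  assumes "swp\<^sup>*\<^sup>* xs ys" "length xs + 1 = k"
  shows "Wrel n k (xs @ [z]) (ys @ [z])"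
  using assms(1)
proof (induction rule: rtranclp_induct)
  case base then show ?case by (rule Wrel_refl)
next
  case (step b c)
  have lb: "length b = length xs" using step.hyps(1)
    by (induction rule: rtranclp_induct) (auto simp: swp_def)
  obtain i where i: "Suc i < length b" "c = b[i := b ! Suc i, Suc i := b ! i]"
    using step.hyps(2) unfolding swp_def by blast
  have e: "c @ [z] = (b @ [z])[Suc i - 1 := (b @ [z]) ! Suc i, Suc i := (b @ [z]) ! (Suc i - 1)]"
    using i by (simp add: nth_append list_update_append)
  have "Wrel n k (b @ [z]) (c @ [z])"
    unfolding e by (rule Wrel_swap) (use i lb assms(2) in auto)
  then show ?case using step.IH Wrel_trans by blast
qed

lemma phiW_bij:
  assumes k: "k > 0"
  shows "bij_betw (phiW k) (Wd n k m) (Wd n k m)"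
  by (rule bij_betwI[where g = "phiW k"]) (use phiW_props[OF k] in auto)

lemma word_main:
  assumes k: "k > 0" and lm: "length m = k" and tau: "\<tau> permutes {1..k-1}"
  defines "m' \<equiv> map (\<lambda>i. m ! (\<tau> i - 1)) [1..<k] @ [m ! (k - 1)]"
  shows "\<exists>F. bij_betw F (Wd n k m) (Wd n k m') \<and>
     (\<forall>w\<in>Wd n k m. des_word (F w) = desW k w \<and> desW k (F w) = des_word w \<and> Pos (F w) = Pos w)"
proof -
  define xs where "xs = map (\<lambda>j. m ! (j - 1)) [1..<k]"
  define ys where "ys = map (\<lambda>i. m ! (\<tau> i - 1)) [1..<k]"
  have m: "m = xs @ [m ! (k - 1)]"
  proof (rule nth_equalityI)
    show "length m = length (xs @ [m ! (k - 1)])" unfolding xs_def using lm k by simp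
  next
    fix i assume i: "i < length m"
    show "m ! i = (xs @ [m ! (k - 1)]) ! i"
    proof (cases "i < k - 1")
      case True then show ?thesis unfolding xs_def by (simp add: nth_append)
    next
      case False
      then have "i = k - 1" using i lm by simp
      then show ?thesis unfolding xs_def by (simp add: nth_append)
    qed
  qed
  have S: "{1..k-1} = {1..<k}" using k by auto
  have ti: "inj_on \<tau> {1..<k}" using permutes_inj_on[OF tau] S by simp
  have tim: "\<tau> ` {1..<k} = {1..<k}" using permutes_image[OF tau] S by simp
  have "mset (map \<tau> [1..<k]) = mset [1..<k]"
    using image_mset_mset_set[OF ti] tim by simp
  moreover have "ys = map (\<lambda>j. m ! (j - 1)) (map \<tau> [1..<k])" unfolding ys_def by simp
  ultimately have "mset xs = mset ys"
    unfolding xs_def by (simp only: mset_map)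
  then have "swp\<^sup>*\<^sup>* xs ys" by (rule swp_connect)
  moreover have "length xs + 1 = k" unfolding xs_def using k by simp
  ultimately have "Wrel n k (xs @ [m ! (k - 1)]) (ys @ [m ! (k - 1)])" by (rule Wrel_perm)
  then have "Wrel n k m m'" unfolding m'_def ys_def[symmetric] using m by simp
  then obtain F where F: "bij_betw F (Wd n k m) (Wd n k m')"
    "\<forall>w\<in>Wd n k m. des_word (F w) = des_word w \<and> desW k (F w) = desW k w \<and> Pos (F w) = Pos w"
    unfolding Wrel_def by blast
  have "bij_betw (phiW k \<circ> F) (Wd n k m) (Wd n k m')"
    using F(1) phiW_bij[OF k] by (rule bij_betw_trans)
  moreover have "\<forall>w\<in>Wd n k m. des_word ((phiW k \<circ> F) w) = desW k w \<and> desW k ((phiW k \<circ> F) w) = des_word w \<and>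
      Pos ((phiW k \<circ> F) w) = Pos w"
  proof
    fix w assume w: "w \<in> Wd n k m"
    then have Fw: "F w \<in> Wd n k m'" using F(1) bij_betwE by blast
    show "des_word ((phiW k \<circ> F) w) = desW k w \<and> desW k ((phiW k \<circ> F) w) = des_word w \<and>
      Pos ((phiW k \<circ> F) w) = Pos w"
      using phiW_props(3-5)[OF k Fw] F(2) w by simp
  qed
  ultimately show ?thesis by blast
qed

definition rk :: "nat set \<Rightarrow> nat \<Rightarrow> nat" where
  "rk S y = card {x \<in> S. x \<le> y}"

definition NF :: "nat \<Rightarrow> (nat \<Rightarrow> nat) \<Rightarrow> nat set" where
  "NF n \<pi> = {1..n} - FIX n \<pi>"

definition rdf :: "nat \<Rightarrow> arrangement \<Rightarrow> int list" where
  "rdf n a = map (\<lambda>i. if i \<in> FIX n (fst a) then snd a i else int (fst a i)) [1..<n+1]"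

definition rpf :: "nat \<Rightarrow> nat \<Rightarrow> arrangement \<Rightarrow> int list" where
  "rpf n k a = map (\<lambda>i. if i \<in> FIX n (fst a) \<and> snd a i \<noteq> - int k then snd a i else int (fst a i)) [1..<n+1]"

lemma df_rdf: "df n k a = red_pos (rdf n a)" unfolding df_def rdf_def ..
lemma pf_rpf: "pf n k a = red_pos (rpf n k a)" unfolding pf_def rpf_def ..

lemma red_pos_nth: "i < length w \<Longrightarrow>
  red_pos w ! i = (if 0 < w ! i then int (card {y \<in> set w. 0 < y \<and> y \<le> w ! i}) else w ! i)"
  unfolding red_pos_def by simp

lemma length_red_pos[simp]: "length (red_pos w) = length w"
  unfolding red_pos_def by simp

lemma red_pos_mono:
  assumes x: "x \<in> set w" and y: "y \<in> set w"
  defines "r \<equiv> (\<lambda>x. if 0 < x then int (card {y \<in> set w. 0 < y \<and> y \<le> x}) else x)"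
  shows "(r x > r y) = (x > y)"
proof -
  have pos: "r z > 0" if "z \<in> set w" "z > 0" for z
  proof -
    have "z \<in> {y \<in> set w. 0 < y \<and> y \<le> z}" using that by simp
    then have "card {y \<in> set w. 0 < y \<and> y \<le> z} > 0" by (auto simp: card_gt_0_iff)
    then show ?thesis unfolding r_def using that by simp
  qed
  show ?thesis
  proof (cases "x > 0"; cases "y > 0")
    assume xp: "x > 0" and yp: "y > 0"
    have fin: "finite {v \<in> set w. 0 < v \<and> v \<le> z}" for z by simp
    show ?thesis
    proof
      assume "r x > r y"
      then have "card {v \<in> set w. 0 < v \<and> v \<le> y} < card {v \<in> set w. 0 < v \<and> v \<le> x}"
        unfolding r_def using xp yp by simp
      then show "x > y"
      proof (rule contrapos_pp)
        assume "\<not> x > y"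
        then have "{v \<in> set w. 0 < v \<and> v \<le> x} \<subseteq> {v \<in> set w. 0 < v \<and> v \<le> y}" by auto
        then show "\<not> card {v \<in> set w. 0 < v \<and> v \<le> y} < card {v \<in> set w. 0 < v \<and> v \<le> x}"
          by (simp add: card_mono not_less)
      qed
    next
      assume xy: "x > y"
      have "x \<notin> {v \<in> set w. 0 < v \<and> v \<le> y}" using xy by simp
      moreover have "x \<in> {v \<in> set w. 0 < v \<and> v \<le> x}" using x xp by simp
      moreover have "{v \<in> set w. 0 < v \<and> v \<le> y} \<subseteq> {v \<in> set w. 0 < v \<and> v \<le> x}" using xy by auto
      ultimately have "{v \<in> set w. 0 < v \<and> v \<le> y} \<subset> {v \<in> set w. 0 < v \<and> v \<le> x}"
        by blast
      then have "card {v \<in> set w. 0 < v \<and> v \<le> y} < card {v \<in> set w. 0 < v \<and> v \<le> x}"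
        by (rule psubset_card_mono[OF fin])
      then show "r x > r y" unfolding r_def using xp yp by simp
    qed
  next
    assume "x > 0" "\<not> y > 0" then show ?thesis using pos[OF x] unfolding r_def by auto
  next
    assume "\<not> x > 0" "y > 0" then show ?thesis using pos[OF y] unfolding r_def by auto
  next
    assume "\<not> x > 0" "\<not> y > 0" then show ?thesis unfolding r_def by auto
  qed
qed

lemma des_word_red_pos: "des_word (red_pos w) = des_word w"
proof -
  define r where "r = (\<lambda>x. if 0 < x then int (card {y \<in> set w. 0 < y \<and> y \<le> x}) else x)"
  have rp: "red_pos w = map r w" unfolding red_pos_def r_def ..
  have "cnt (\<lambda>a b. a > b) (map r w) = cnt (\<lambda>a b. r a > r b) w"
    using cntp_map[of "\<lambda>a b. a > b" r None w] by (simp add: cnt_def)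
  also have "\<dots> = cnt (\<lambda>a b. a > b) w"
    unfolding cnt_def
  proof (rule cntp_cong)
    fix a b assume "a \<in> set w \<union> set_option None" "b \<in> set w"
    then show "(r a > r b) = (a > b)" using red_pos_mono[of a w b] unfolding r_def by simp
  qed
  finally show ?thesis unfolding des_word_cnt rp .
qed

lemma rk_mono:
  assumes "finite S" "x \<in> S" "y \<in> S"
  shows "(rk S x < rk S y) = (x < y)"
proof
  assume a: "rk S x < rk S y"
  show "x < y"
  proof (rule ccontr)
    assume "\<not> x < y"
    then have "{z \<in> S. z \<le> y} \<subseteq> {z \<in> S. z \<le> x}" by auto
    then have "rk S y \<le> rk S x" unfolding rk_def by (rule card_mono[rotated]) (use assms in simp)
    then show False using a by simp
  qed
next
  assume a: "x < y"
  have "y \<notin> {z \<in> S. z \<le> x}" using a by simp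
  moreover have "y \<in> {z \<in> S. z \<le> y}" using assms by simp
  moreover have "{z \<in> S. z \<le> x} \<subseteq> {z \<in> S. z \<le> y}" using a by auto
  ultimately have "{z \<in> S. z \<le> x} \<subset> {z \<in> S. z \<le> y}" by blast
  moreover have "finite {z \<in> S. z \<le> y}" using assms by simp
  ultimately show "rk S x < rk S y" unfolding rk_def by (simp add: psubset_card_mono)
qed

lemma rk_inj: "finite S \<Longrightarrow> x \<in> S \<Longrightarrow> y \<in> S \<Longrightarrow> rk S x = rk S y \<Longrightarrow> x = y"
  using rk_mono[of S x y] rk_mono[of S y x] by (cases x y rule: linorder_cases) auto

lemma rk_pos: "finite S \<Longrightarrow> x \<in> S \<Longrightarrow> rk S x \<ge> 1"
proof -
  assume f: "finite S" and x: "x \<in> S"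
  have "x \<in> {z \<in> S. z \<le> x}" using x by simp
  then have "card {z \<in> S. z \<le> x} > 0" using f by (auto simp: card_gt_0_iff)
  then show ?thesis unfolding rk_def by simp
qed

lemma rk_less: "finite S \<Longrightarrow> x \<in> S \<Longrightarrow> rk S x = card {z \<in> S. z < x} + 1"
proof -
  assume f: "finite S" and x: "x \<in> S"
  have "{z \<in> S. z \<le> x} = insert x {z \<in> S. z < x}" using x by auto
  then show ?thesis unfolding rk_def using f by simp
qed

lemma annot_nth: "i < length w \<Longrightarrow>
  annot t w ! i = (w ! i, 0 < w ! i \<and> w ! i > int (t + length (filter (\<lambda>x. x > 0) (take i w))) + 1)"
proof (induction w arbitrary: t i)
  case Nil then show ?case by simp
next
  case (Cons x w)
  show ?case
  proof (cases i)
    case 0 then show ?thesis by simp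
  next
    case (Suc j)
    then have j: "j < length w" using Cons.prems by simp
    show ?thesis using Cons.IH[OF j] Suc by auto
  qed
qed

lemma arr_props:
  assumes "(\<pi>, \<phi>) \<in> arrangements n k"
  shows "\<pi> permutes {1..n}" "\<And>i. i \<in> FIX n \<pi> \<Longrightarrow> \<phi> i \<in> {- int k..-1}"
    "\<And>i. i \<notin> FIX n \<pi> \<Longrightarrow> \<phi> i = 0"
  using assms unfolding arrangements_def by (auto split: if_splits)

lemma NF_props:
  assumes p: "\<pi> permutes {1..n}"
  shows "finite (NF n \<pi>)" "NF n \<pi> \<subseteq> {1..n}"
    "\<And>x. x \<in> NF n \<pi> \<Longrightarrow> \<pi> x \<in> NF n \<pi>" "\<And>x. x \<in> NF n \<pi> \<Longrightarrow> \<pi> x \<noteq> x"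
    "\<And>x. x \<in> FIX n \<pi> \<Longrightarrow> \<pi> x = x" "FIX n \<pi> \<subseteq> {1..n}"
    "\<And>x. x \<in> {1..n} \<Longrightarrow> x \<notin> FIX n \<pi> \<Longrightarrow> x \<in> NF n \<pi>"
proof -
  show "finite (NF n \<pi>)" "NF n \<pi> \<subseteq> {1..n}" "FIX n \<pi> \<subseteq> {1..n}" unfolding NF_def FIX_def by auto
  show "\<And>x. x \<in> NF n \<pi> \<Longrightarrow> \<pi> x \<noteq> x" "\<And>x. x \<in> FIX n \<pi> \<Longrightarrow> \<pi> x = x"
    "\<And>x. x \<in> {1..n} \<Longrightarrow> x \<notin> FIX n \<pi> \<Longrightarrow> x \<in> NF n \<pi>"
    unfolding NF_def FIX_def by auto
  fix x assume x: "x \<in> NF n \<pi>"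
  then have x1: "x \<in> {1..n}" "\<pi> x \<noteq> x" unfolding NF_def FIX_def by auto
  have "\<pi> x \<in> {1..n}" using permutes_in_image[OF p] x1 by simp
  moreover have "\<pi> (\<pi> x) \<noteq> \<pi> x"
    using permutes_inj[OF p] x1(2) by (metis injD)
  ultimately show "\<pi> x \<in> NF n \<pi>" unfolding NF_def FIX_def by auto
qed

lemma rdf_nth: "i < n \<Longrightarrow> rdf n (\<pi>, \<phi>) ! i = (if Suc i \<in> FIX n \<pi> then \<phi> (Suc i) else int (\<pi> (Suc i)))"
  unfolding rdf_def by (simp del: upt_Suc)

lemma rpf_nth: "i < n \<Longrightarrow> rpf n k (\<pi>, \<phi>) ! i =
   (if Suc i \<in> FIX n \<pi> \<and> \<phi> (Suc i) \<noteq> - int k then \<phi> (Suc i) else int (\<pi> (Suc i)))"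
  unfolding rpf_def by (simp del: upt_Suc)

lemma length_rdf[simp]: "length (rdf n a) = n" unfolding rdf_def by simp
lemma length_rpf[simp]: "length (rpf n k a) = n" unfolding rpf_def by simp
lemma length_df[simp]: "length (df n k a) = n" unfolding df_rdf by simp

lemma rdf_pos_set:
  assumes a: "(\<pi>, \<phi>) \<in> arrangements n k"
  shows "{y \<in> set (rdf n (\<pi>, \<phi>)). 0 < y} = int ` NF n \<pi>"
proof -
  note ap = arr_props[OF a]
  note np = NF_props[OF ap(1)]
  have "set (rdf n (\<pi>, \<phi>)) = (\<lambda>i. if i \<in> FIX n \<pi> then \<phi> i else int (\<pi> i)) ` {1..n}"
    unfolding rdf_def by auto
  then have "{y \<in> set (rdf n (\<pi>, \<phi>)). 0 < y} = (\<lambda>i. int (\<pi> i)) ` NF n \<pi>"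
  proof -
    assume s: "set (rdf n (\<pi>, \<phi>)) = (\<lambda>i. if i \<in> FIX n \<pi> then \<phi> i else int (\<pi> i)) ` {1..n}"
    show ?thesis
    proof (rule set_eqI, rule iffI)
      fix y assume "y \<in> {y \<in> set (rdf n (\<pi>, \<phi>)). 0 < y}"
      then obtain i where i: "i \<in> {1..n}" "y = (if i \<in> FIX n \<pi> then \<phi> i else int (\<pi> i))" "0 < y"
        using s by auto
      have "i \<notin> FIX n \<pi>" using i ap(2)[of i] by (auto split: if_splits)
      then show "y \<in> (\<lambda>i. int (\<pi> i)) ` NF n \<pi>" using i np(7) by auto
    next
      fix y assume "y \<in> (\<lambda>i. int (\<pi> i)) ` NF n \<pi>"
      then obtain i where i: "i \<in> NF n \<pi>" "y = int (\<pi> i)" by auto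
      have "\<pi> i \<in> {1..n}" using np(3)[OF i(1)] np(2) by auto
      moreover have "i \<in> {1..n}" "i \<notin> FIX n \<pi>" using i(1) unfolding NF_def by auto
      ultimately show "y \<in> {y \<in> set (rdf n (\<pi>, \<phi>)). 0 < y}" using s i by force
    qed
  qed
  also have "\<dots> = int ` \<pi> ` NF n \<pi>" by auto
  also have "\<pi> ` NF n \<pi> = NF n \<pi>"
    by (rule endo_inj_surj) (use np permutes_inj_on[OF ap(1)] in auto)
  finally show ?thesis .
qed

lemma df_nth:
  assumes a: "(\<pi>, \<phi>) \<in> arrangements n k" and i: "i < n"
  shows "df n k (\<pi>, \<phi>) ! i = (if Suc i \<in> FIX n \<pi> then \<phi> (Suc i) else int (rk (NF n \<pi>) (\<pi> (Suc i))))"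
proof -
  note ap = arr_props[OF a]
  note np = NF_props[OF ap(1)]
  show ?thesis
  proof (cases "Suc i \<in> FIX n \<pi>")
    case True
    then have "\<phi> (Suc i) < 0" using ap(2) by force
    then show ?thesis using True i unfolding df_rdf by (simp add: red_pos_nth rdf_nth)
  next
    case False
    then have nf: "Suc i \<in> NF n \<pi>" using i np(7) by auto
    have pos: "0 < int (\<pi> (Suc i))" using np(3)[OF nf] np(2) by auto
    have "{y \<in> set (rdf n (\<pi>, \<phi>)). 0 < y \<and> y \<le> int (\<pi> (Suc i))} =
          {y \<in> {y \<in> set (rdf n (\<pi>, \<phi>)). 0 < y}. y \<le> int (\<pi> (Suc i))}" by auto
    also have "\<dots> = {y \<in> int ` NF n \<pi>. y \<le> int (\<pi> (Suc i))}" unfolding rdf_pos_set[OF a] ..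
    also have "\<dots> = int ` {x \<in> NF n \<pi>. x \<le> \<pi> (Suc i)}" by auto
    finally have "card {y \<in> set (rdf n (\<pi>, \<phi>)). 0 < y \<and> y \<le> int (\<pi> (Suc i))} = rk (NF n \<pi>) (\<pi> (Suc i))"
      unfolding rk_def by (simp add: card_image)
    then show ?thesis using False i pos unfolding df_rdf by (simp add: red_pos_nth rdf_nth)
  qed
qed

lemma df_pos_iff:
  assumes a: "(\<pi>, \<phi>) \<in> arrangements n k" and i: "i < n"
  shows "(0 < df n k (\<pi>, \<phi>) ! i) = (Suc i \<in> NF n \<pi>)"
proof -
  note ap = arr_props[OF a]
  note np = NF_props[OF ap(1)]
  show ?thesis
  proof (cases "Suc i \<in> FIX n \<pi>")
    case True
    then have "\<phi> (Suc i) < 0" using ap(2) by force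
    then show ?thesis using True df_nth[OF a i] unfolding NF_def by simp
  next
    case False
    then have nf: "Suc i \<in> NF n \<pi>" using i np(7) by auto
    then show ?thesis using False df_nth[OF a i] rk_pos[OF np(1) np(3)[OF nf]] by simp
  qed
qed

lemma df_take_count:
  assumes a: "(\<pi>, \<phi>) \<in> arrangements n k" and i: "i \<le> n"
  shows "length (filter (\<lambda>x. x > 0) (take i (df n k (\<pi>, \<phi>)))) = card {p \<in> NF n \<pi>. p \<le> i}"
proof -
  have "length (filter (\<lambda>x. x > 0) (take i (df n k (\<pi>, \<phi>)))) =
        card {j. j < i \<and> 0 < df n k (\<pi>, \<phi>) ! j}"
    unfolding length_filter_conv_card using i
    by (intro arg_cong[where f=card]) (auto simp: min_def nth_take)
  also have "{j. j < i \<and> 0 < df n k (\<pi>, \<phi>) ! j} = {j. j < i \<and> Suc j \<in> NF n \<pi>}"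
    using df_pos_iff[OF a] i by auto
  also have "card \<dots> = card (Suc ` {j. j < i \<and> Suc j \<in> NF n \<pi>})" by (simp add: card_image)
  also have "Suc ` {j. j < i \<and> Suc j \<in> NF n \<pi>} = {p \<in> NF n \<pi>. p \<le> i}"
  proof (rule set_eqI, rule iffI)
    fix p assume "p \<in> {p \<in> NF n \<pi>. p \<le> i}"
    moreover then have "p \<ge> 1" unfolding NF_def by auto
    ultimately show "p \<in> Suc ` {j. j < i \<and> Suc j \<in> NF n \<pi>}"
      by (auto intro!: image_eqI[of _ _ "p - 1"])
  qed auto
  finally show ?thesis .
qed

lemma ann_df_nth:
  assumes a: "(\<pi>, \<phi>) \<in> arrangements n k" and i: "i < n"
  shows "ann (df n k (\<pi>, \<phi>)) ! i = (if Suc i \<in> FIX n \<pi> then (\<phi> (Suc i), False)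
            else (int (rk (NF n \<pi>) (\<pi> (Suc i))), \<pi> (Suc i) > Suc i))"
proof -
  note ap = arr_props[OF a]
  note np = NF_props[OF ap(1)]
  have an: "ann (df n k (\<pi>, \<phi>)) ! i = (df n k (\<pi>, \<phi>) ! i, 0 < df n k (\<pi>, \<phi>) ! i \<and>
      df n k (\<pi>, \<phi>) ! i > int (length (filter (\<lambda>x. x > 0) (take i (df n k (\<pi>, \<phi>))))) + 1)"
    unfolding ann_def using annot_nth[of i "df n k (\<pi>, \<phi>)" 0] i by simp
  show ?thesis
  proof (cases "Suc i \<in> FIX n \<pi>")
    case True
    then show ?thesis using an df_nth[OF a i] df_pos_iff[OF a i] unfolding NF_def by simp
  next
    case False
    then have nf: "Suc i \<in> NF n \<pi>" using i np(7) by auto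
    have c: "card {p \<in> NF n \<pi>. p \<le> i} + 1 = rk (NF n \<pi>) (Suc i)"
      using rk_less[OF np(1) nf] by (simp add: less_Suc_eq_le)
    have "(int (rk (NF n \<pi>) (\<pi> (Suc i))) > int (card {p \<in> NF n \<pi>. p \<le> i}) + 1) =
          (rk (NF n \<pi>) (Suc i) < rk (NF n \<pi>) (\<pi> (Suc i)))" using c by linarith
    also have "\<dots> = (Suc i < \<pi> (Suc i))" using rk_mono[OF np(1) nf np(3)[OF nf]] .
    finally show ?thesis using an df_nth[OF a i] df_pos_iff[OF a i] False nf
        df_take_count[OF a, of i] i by simp
  qed
qed

lemma cnt_card: "cnt R w = card {i. Suc i < length w \<and> R (w ! i) (w ! Suc i)}"
proof (cases w)
  case Nil then show ?thesis by (simp add: cnt_def)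
next
  case (Cons x v)
  then show ?thesis unfolding cnt_def using cntp_Some_card[of R x v] by simp
qed

lemma length_ann[simp]: "length (ann w) = length w"
  by (metis ann_def length_map map_fst_annot)

lemma pair_eq:
  assumes a: "(\<pi>, \<phi>) \<in> arrangements n k" and i: "Suc i < n"
  shows "(rpf n k (\<pi>, \<phi>) ! i > rpf n k (\<pi>, \<phi>) ! Suc i) =
         gtP k (ann (df n k (\<pi>, \<phi>)) ! i) (ann (df n k (\<pi>, \<phi>)) ! Suc i)"
proof -
  note ap = arr_props[OF a]
  note np = NF_props[OF ap(1)]
  define p where "p = Suc i"
  define q where "q = Suc (Suc i)"
  have pq: "p \<in> {1..n}" "q \<in> {1..n}" using i unfolding p_def q_def by auto
  have r1: "rpf n k (\<pi>, \<phi>) ! i = (if p \<in> FIX n \<pi> \<and> \<phi> p \<noteq> - int k then \<phi> p else int (\<pi> p))"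
    using rpf_nth[of i n k \<pi> \<phi>] i unfolding p_def by simp
  have r2: "rpf n k (\<pi>, \<phi>) ! Suc i = (if q \<in> FIX n \<pi> \<and> \<phi> q \<noteq> - int k then \<phi> q else int (\<pi> q))"
    using rpf_nth[of "Suc i" n k \<pi> \<phi>] i unfolding q_def by simp
  have a1: "ann (df n k (\<pi>, \<phi>)) ! i = (if p \<in> FIX n \<pi> then (\<phi> p, False)
            else (int (rk (NF n \<pi>) (\<pi> p)), \<pi> p > p))"
    using ann_df_nth[OF a, of i] i unfolding p_def by simp
  have a2: "ann (df n k (\<pi>, \<phi>)) ! Suc i = (if q \<in> FIX n \<pi> then (\<phi> q, False)
            else (int (rk (NF n \<pi>) (\<pi> q)), \<pi> q > q))"
    using ann_df_nth[OF a, of "Suc i"] i unfolding q_def by simp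
  have qp: "q = Suc p" unfolding p_def q_def by simp
  show ?thesis
  proof (cases "p \<in> FIX n \<pi>")
    case pF: True
    have fp: "\<phi> p \<in> {- int k..-1}" "\<pi> p = p" using ap(2)[OF pF] np(5)[OF pF] by auto
    show ?thesis
    proof (cases "q \<in> FIX n \<pi>")
      case qF: True
      have fq: "\<phi> q \<in> {- int k..-1}" "\<pi> q = q" using ap(2)[OF qF] np(5)[OF qF] by auto
      show ?thesis unfolding r1 r2 a1 a2 using pF qF fp fq qp by (auto simp: gtP_def)
    next
      case qN: False
      then have qn: "q \<in> NF n \<pi>" using np(7) pq by auto
      have "\<pi> q \<noteq> p" using fp(2) permutes_inj[OF ap(1)] qp by (metis injD n_not_Suc_n)
      moreover have "\<pi> q \<noteq> q" using np(4)[OF qn] .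
      moreover have "rk (NF n \<pi>) (\<pi> q) \<ge> 1" using rk_pos[OF np(1) np(3)[OF qn]] .
      ultimately show ?thesis unfolding r1 r2 a1 a2 using pF qN fp qp by (auto simp: gtP_def)
    qed
  next
    case pN: False
    then have pn: "p \<in> NF n \<pi>" using np(7) pq by auto
    have rp: "rk (NF n \<pi>) (\<pi> p) \<ge> 1" using rk_pos[OF np(1) np(3)[OF pn]] .
    show ?thesis
    proof (cases "q \<in> FIX n \<pi>")
      case qF: True
      have fq: "\<phi> q \<in> {- int k..-1}" "\<pi> q = q" using ap(2)[OF qF] np(5)[OF qF] by auto
      have "\<pi> p \<noteq> q" using fq(2) permutes_inj[OF ap(1)] qp by (metis injD n_not_Suc_n)
      then show ?thesis unfolding r1 r2 a1 a2 using pN qF fq qp rp by (auto simp: gtP_def)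
    next
      case qN: False
      then have qn: "q \<in> NF n \<pi>" using np(7) pq by auto
      have rq: "rk (NF n \<pi>) (\<pi> q) \<ge> 1" using rk_pos[OF np(1) np(3)[OF qn]] .
      have m: "(rk (NF n \<pi>) (\<pi> q) < rk (NF n \<pi>) (\<pi> p)) = (\<pi> q < \<pi> p)"
        using rk_mono[OF np(1) np(3)[OF qn] np(3)[OF pn]] .
      have kk: "int (rk (NF n \<pi>) (\<pi> p)) \<noteq> - int k" "int (rk (NF n \<pi>) (\<pi> q)) \<noteq> - int k"
        using rp rq by auto
      show ?thesis unfolding r1 r2 a1 a2 using pN qN m kk rp rq by (simp add: gtP_def)
    qed
  qed
qed

lemma des_arr_eq:
  assumes a: "(\<pi>, \<phi>) \<in> arrangements n k"
  shows "des_arr n k (\<pi>, \<phi>) = desW k (df n k (\<pi>, \<phi>))"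
proof -
  have "des_arr n k (\<pi>, \<phi>) = des_word (rpf n k (\<pi>, \<phi>))"
    unfolding des_arr_def pf_rpf des_word_red_pos ..
  also have "\<dots> = card {i. Suc i < n \<and> rpf n k (\<pi>, \<phi>) ! i > rpf n k (\<pi>, \<phi>) ! Suc i}"
    unfolding des_word_def by simp
  also have "\<dots> = card {i. Suc i < n \<and> gtP k (ann (df n k (\<pi>, \<phi>)) ! i) (ann (df n k (\<pi>, \<phi>)) ! Suc i)}"
    using pair_eq[OF a] by (intro arg_cong[where f=card]) blast
  also have "\<dots> = desW k (df n k (\<pi>, \<phi>))"
    unfolding desW_def cnt_card by simp
  finally show ?thesis .
qed

lemma count_mset_filter: "count (mset xs) x = length (filter (\<lambda>y. y = x) xs)"
  by (induction xs) auto

lemma fix_i_count: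
  assumes a: "(\<pi>, \<phi>) \<in> arrangements n k" and i: "i \<ge> 1"
  shows "fix_i n i (\<pi>, \<phi>) = count (mset (df n k (\<pi>, \<phi>))) (- int i)"
proof -
  note ap = arr_props[OF a]
  note np = NF_props[OF ap(1)]
  have "count (mset (df n k (\<pi>, \<phi>))) (- int i) = card {j. j < n \<and> df n k (\<pi>, \<phi>) ! j = - int i}"
    unfolding count_mset_filter length_filter_conv_card by simp
  also have "{j. j < n \<and> df n k (\<pi>, \<phi>) ! j = - int i} = {j. j < n \<and> Suc j \<in> FIX n \<pi> \<and> \<phi> (Suc j) = - int i}"
  proof (rule set_eqI, rule iffI)
    fix j assume j: "j \<in> {j. j < n \<and> df n k (\<pi>, \<phi>) ! j = - int i}"
    then have "\<not> 0 < df n k (\<pi>, \<phi>) ! j" using i by simp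
    moreover have "j < n" using j by simp
    ultimately have "Suc j \<notin> NF n \<pi>" using df_pos_iff[OF a, of j] by simp
    moreover have "Suc j \<in> {1..n}" using j by simp
    ultimately have "Suc j \<in> FIX n \<pi>" using np(7)[of "Suc j"] by blast
    then show "j \<in> {j. j < n \<and> Suc j \<in> FIX n \<pi> \<and> \<phi> (Suc j) = - int i}"
      using j df_nth[OF a] by auto
  next
    fix j assume "j \<in> {j. j < n \<and> Suc j \<in> FIX n \<pi> \<and> \<phi> (Suc j) = - int i}"
    then show "j \<in> {j. j < n \<and> df n k (\<pi>, \<phi>) ! j = - int i}" using df_nth[OF a] by auto
  qed
  also have "card \<dots> = card (Suc ` {j. j < n \<and> Suc j \<in> FIX n \<pi> \<and> \<phi> (Suc j) = - int i})"
    by (simp add: card_image)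
  also have "Suc ` {j. j < n \<and> Suc j \<in> FIX n \<pi> \<and> \<phi> (Suc j) = - int i} = {j \<in> FIX n \<pi>. \<phi> j = - int i}"
  proof (rule set_eqI, rule iffI)
    fix p assume p: "p \<in> {j \<in> FIX n \<pi>. \<phi> j = - int i}"
    then have "p \<in> {1..n}" using np(6) by auto
    then show "p \<in> Suc ` {j. j < n \<and> Suc j \<in> FIX n \<pi> \<and> \<phi> (Suc j) = - int i}"
      using p by (auto intro!: image_eqI[of _ _ "p - 1"])
  qed auto
  finally show ?thesis unfolding fix_i_def by simp
qed

lemma sorted_card_le:
  fixes L :: "nat list"
  assumes s: "sorted_wrt (<) L" and j: "j < length L"
  shows "card {x \<in> set L. x \<le> L ! j} = Suc j"
proof -
  have "{x \<in> set L. x \<le> L ! j} = (\<lambda>t. L ! t) ` {..j}"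
  proof (rule set_eqI, rule iffI)
    fix x assume "x \<in> {x \<in> set L. x \<le> L ! j}"
    then obtain t where t: "t < length L" "x = L ! t" "L ! t \<le> L ! j" by (auto simp: in_set_conv_nth)
    have "t \<le> j"
    proof (rule ccontr)
      assume "\<not> t \<le> j"
      then have "L ! j < L ! t" using sorted_wrt_nth_less[OF s, of j t] t by simp
      then show False using t(3) by linarith
    qed
    then show "x \<in> (\<lambda>t. L ! t) ` {..j}" using t by auto
  next
    fix x assume "x \<in> (\<lambda>t. L ! t) ` {..j}"
    then obtain t where t: "t \<le> j" "x = L ! t" by auto
    have "L ! t \<le> L ! j"
      using sorted_wrt_nth_less[OF s, of t j] t j by (cases "t = j") auto
    then show "x \<in> {x \<in> set L. x \<le> L ! j}" using t j by auto
  qed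
  moreover have "inj_on (\<lambda>t. L ! t) {..j}"
    using s j unfolding strict_sorted_iff by (auto simp: inj_on_def nth_eq_iff_index_eq)
  ultimately show ?thesis by (simp add: card_image)
qed

lemma rk_image:
  assumes "finite S"
  shows "rk S ` S = {1..card S}"
proof -
  have sub: "rk S ` S \<subseteq> {1..card S}"
  proof
    fix y assume "y \<in> rk S ` S"
    then obtain x where x: "x \<in> S" "y = rk S x" by auto
    have "rk S x \<le> card S" unfolding rk_def by (rule card_mono) (use assms in auto)
    then show "y \<in> {1..card S}" using rk_pos[OF assms x(1)] x by auto
  qed
  have "inj_on (rk S) S" using rk_inj[OF assms] by (auto simp: inj_on_def)
  then have "card (rk S ` S) = card {1..card S}" by (simp add: card_image)
  then show ?thesis using card_subset_eq[OF _ sub] by simp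
qed

lemma df_as_map:
  assumes a: "(\<pi>, \<phi>) \<in> arrangements n k"
  shows "df n k (\<pi>, \<phi>) = map (\<lambda>p. if p \<in> FIX n \<pi> then \<phi> p else int (rk (NF n \<pi>) (\<pi> p))) [1..<n+1]"
  by (rule nth_equalityI) (simp_all add: df_nth[OF a] del: upt_Suc)

lemma Pos_df:
  assumes a: "(\<pi>, \<phi>) \<in> arrangements n k"
  shows "Pos (df n k (\<pi>, \<phi>)) = map (\<lambda>p. int (rk (NF n \<pi>) (\<pi> p))) (filter (\<lambda>p. p \<in> NF n \<pi>) [1..<n+1])"
proof -
  note ap = arr_props[OF a]
  note np = NF_props[OF ap(1)]
  define g where "g p = (if p \<in> FIX n \<pi> then \<phi> p else int (rk (NF n \<pi>) (\<pi> p)))" for p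
  have "Pos (df n k (\<pi>, \<phi>)) = map g (filter (\<lambda>p. 0 < g p) [1..<n+1])"
    unfolding Pos_def df_as_map[OF a] g_def[symmetric] by (simp add: filter_map comp_def)
  also have "filter (\<lambda>p. 0 < g p) [1..<n+1] = filter (\<lambda>p. p \<in> NF n \<pi>) [1..<n+1]"
  proof (rule filter_cong)
    fix p assume "p \<in> set [1..<n+1]"
    then have p: "p \<in> {1..n}" by auto
    show "(0 < g p) = (p \<in> NF n \<pi>)"
    proof (cases "p \<in> FIX n \<pi>")
      case True then show ?thesis using ap(2)[OF True] unfolding g_def NF_def by auto
    next
      case False
      then have pn: "p \<in> NF n \<pi>" using np(7) p by auto
      have "rk (NF n \<pi>) (\<pi> p) \<ge> 1" using rk_pos[OF np(1) np(3)[OF pn]] .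
      then show ?thesis using pn False unfolding g_def by auto
    qed
  qed simp
  also have "map g (filter (\<lambda>p. p \<in> NF n \<pi>) [1..<n+1]) =
             map (\<lambda>p. int (rk (NF n \<pi>) (\<pi> p))) (filter (\<lambda>p. p \<in> NF n \<pi>) [1..<n+1])"
    by (rule map_cong) (auto simp: g_def NF_def)
  finally show ?thesis .
qed

lemma df_in_Wd:
  assumes a: "(\<pi>, \<phi>) \<in> arrangements_m n k m"
  shows "df n k (\<pi>, \<phi>) \<in> Wd n k m"
proof -
  have a0: "(\<pi>, \<phi>) \<in> arrangements n k" using a unfolding arrangements_m_def by simp
  note ap = arr_props[OF a0]
  note np = NF_props[OF ap(1)]
  define L where "L = filter (\<lambda>p. p \<in> NF n \<pi>) [1..<n+1]"
  have sL: "sorted_wrt (<) L" unfolding L_def by (rule sorted_wrt_filter) (rule sorted_wrt_upt)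
  have setL: "set L = NF n \<pi>" unfolding L_def using np(2) by auto
  have dL: "distinct L" using sL strict_sorted_iff by blast
  have lenL: "length L = card (NF n \<pi>)" using distinct_card[OF dL] setL by simp
  define D where "D = Pos (df n k (\<pi>, \<phi>))"
  have D: "D = map (\<lambda>p. int (rk (NF n \<pi>) (\<pi> p))) L" unfolding D_def L_def by (rule Pos_df[OF a0])
  have injf: "inj_on (\<lambda>p. int (rk (NF n \<pi>) (\<pi> p))) (NF n \<pi>)"
  proof (rule inj_onI)
    fix x y assume xy: "x \<in> NF n \<pi>" "y \<in> NF n \<pi>" "int (rk (NF n \<pi>) (\<pi> x)) = int (rk (NF n \<pi>) (\<pi> y))"
    then have "\<pi> x = \<pi> y" using rk_inj[OF np(1) np(3) np(3)] by simp
    then show "x = y" using permutes_inj[OF ap(1)] by (metis injD)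
  qed
  have dist: "distinct D" unfolding D using dL injf setL by (simp add: distinct_map)
  have setD: "set D = {1..int (length D)}"
  proof -
    have "set D = int ` rk (NF n \<pi>) ` \<pi> ` NF n \<pi>" unfolding D setL[symmetric] by auto
    also have "\<pi> ` NF n \<pi> = NF n \<pi>"
      by (rule endo_inj_surj) (use np permutes_inj_on[OF ap(1)] in auto)
    also have "rk (NF n \<pi>) ` NF n \<pi> = {1..card (NF n \<pi>)}" by (rule rk_image[OF np(1)])
    also have "int ` {1..card (NF n \<pi>)} = {1..int (card (NF n \<pi>))}"
    proof (rule set_eqI, rule iffI)
      fix x assume "x \<in> {1..int (card (NF n \<pi>))}"
      then have "nat x \<in> {1..card (NF n \<pi>)}" "x = int (nat x)" by auto
      then show "x \<in> int ` {1..card (NF n \<pi>)}" by blast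
    qed auto
    finally show ?thesis unfolding D using lenL by simp
  qed
  have nfix: "D ! j \<noteq> int j + 1" if j: "j < length D" for j
  proof
    assume eq: "D ! j = int j + 1"
    have jl: "j < length L" using j D by simp
    have Lj: "L ! j \<in> NF n \<pi>" using setL jl nth_mem by blast
    have "rk (NF n \<pi>) (L ! j) = Suc j"
      unfolding rk_def setL[symmetric] using sorted_card_le[OF sL jl] by simp
    moreover have "D ! j = int (rk (NF n \<pi>) (\<pi> (L ! j)))" unfolding D using jl by simp
    ultimately have "rk (NF n \<pi>) (\<pi> (L ! j)) = rk (NF n \<pi>) (L ! j)" using eq by simp
    then have "\<pi> (L ! j) = L ! j" using rk_inj[OF np(1) np(3)[OF Lj] Lj] by simp
    then show False using np(4)[OF Lj] by simp
  qed
  have der: "der_list D" unfolding der_list_def using dist setD nfix by simp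
  have vals: "\<forall>x\<in>set (df n k (\<pi>, \<phi>)). x \<noteq> 0 \<and> - int k \<le> x"
  proof
    fix x assume "x \<in> set (df n k (\<pi>, \<phi>))"
    then obtain j where j: "j < n" "x = df n k (\<pi>, \<phi>) ! j" by (auto simp: in_set_conv_nth)
    show "x \<noteq> 0 \<and> - int k \<le> x"
    proof (cases "Suc j \<in> FIX n \<pi>")
      case True then show ?thesis using ap(2)[OF True] j df_nth[OF a0 j(1)] by auto
    next
      case False
      then have "Suc j \<in> NF n \<pi>" using np(7) j by auto
      then show ?thesis using rk_pos[OF np(1) np(3)] j df_nth[OF a0 j(1)] False by fastforce
    qed
  qed
  have cnts: "\<forall>i\<in>{1..k}. count (mset (df n k (\<pi>, \<phi>))) (- int i) = m ! (i - 1)"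
    using a fix_i_count[OF a0] unfolding arrangements_m_def by auto
  show ?thesis unfolding Wd_def using vals der cnts D_def by simp
qed

lemma df_inj: "inj_on (df n k) (arrangements n k)"
proof (rule inj_onI)
  fix a b assume a: "a \<in> arrangements n k" and b: "b \<in> arrangements n k" and e: "df n k a = df n k b"
  obtain \<pi> \<phi> where ab: "a = (\<pi>, \<phi>)" by force
  obtain \<pi>' \<phi>' where bb: "b = (\<pi>', \<phi>')" by force
  have a': "(\<pi>, \<phi>) \<in> arrangements n k" using a ab by simp
  have b': "(\<pi>', \<phi>') \<in> arrangements n k" using b bb by simp
  have e': "df n k (\<pi>, \<phi>) = df n k (\<pi>', \<phi>')" using e ab bb by simp
  note apa = arr_props[OF a'] and apb = arr_props[OF b']
  note npa = NF_props[OF apa(1)] and npb = NF_props[OF apb(1)]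
  have NFe: "NF n \<pi> = NF n \<pi>'"
  proof (rule set_eqI)
    fix p
    show "(p \<in> NF n \<pi>) = (p \<in> NF n \<pi>')"
    proof (cases "p \<in> {1..n}")
      case True
      then have "p - 1 < n" "Suc (p - 1) = p" by auto
      then show ?thesis using df_pos_iff[OF a' \<open>p - 1 < n\<close>] df_pos_iff[OF b' \<open>p - 1 < n\<close>] e' by simp
    next
      case False then show ?thesis using npa(2) npb(2) by auto
    qed
  qed
  have FIXe: "FIX n \<pi> = FIX n \<pi>'"
    using NFe npa(6) npb(6) unfolding NF_def by blast
  have phie: "\<phi> = \<phi>'"
  proof
    fix p show "\<phi> p = \<phi>' p"
    proof (cases "p \<in> FIX n \<pi>")
      case True
      then have "p \<in> {1..n}" using npa(6) by blast
      then have p: "p - 1 < n" "Suc (p - 1) = p" by auto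
      then show ?thesis using df_nth[OF a' p(1)] df_nth[OF b' p(1)] e' True FIXe by simp
    next
      case False then show ?thesis using apa(3) apb(3) FIXe by simp
    qed
  qed
  have pie: "\<pi> = \<pi>'"
  proof
    fix p show "\<pi> p = \<pi>' p"
    proof (cases "p \<in> NF n \<pi>")
      case True
      then have "p \<in> {1..n}" using npa(2) by blast
      then have p: "p - 1 < n" "Suc (p - 1) = p" by auto
      have "p \<notin> FIX n \<pi>" using True unfolding NF_def by simp
      then have "int (rk (NF n \<pi>) (\<pi> p)) = int (rk (NF n \<pi>) (\<pi>' p))"
        using df_nth[OF a' p(1)] df_nth[OF b' p(1)] e' FIXe NFe p(2) by simp
      then show ?thesis using rk_inj[OF npa(1) npa(3)[OF True]] npb(3)[of p] True NFe by simp
    next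
      case False
      show ?thesis
      proof (cases "p \<in> FIX n \<pi>")
        case True then show ?thesis using npa(5) npb(5) FIXe by simp
      next
        case nF: False
        then have "p \<notin> {1..n}" using False npa(7) by auto
        then show ?thesis using permutes_not_in[OF apa(1)] permutes_not_in[OF apb(1)] by simp
      qed
    qed
  qed
  show "a = b" using ab bb phie pie by simp
qed

lemma decode:
  assumes w: "w \<in> Wd n k m"
  shows "\<exists>a \<in> arrangements_m n k m. df n k a = w"
proof -
  have lw: "length w = n" and vals: "\<forall>x\<in>set w. x \<noteq> 0 \<and> - int k \<le> x" and der: "der_list (Pos w)"
    and cnts: "\<forall>i\<in>{1..k}. count (mset w) (- int i) = m ! (i - 1)"
    using w unfolding Wd_def by auto
  define F where "F = {p \<in> {1..n}. w ! (p - 1) < 0}"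
  define NS where "NS = {p \<in> {1..n}. w ! (p - 1) > 0}"
  define L where "L = filter (\<lambda>p. w ! (p - 1) > 0) [1..<n+1]"
  define D where "D = Pos w"
  have wv: "p \<in> {1..n} \<Longrightarrow> w ! (p - 1) \<noteq> 0 \<and> - int k \<le> w ! (p - 1)" for p
  proof -
    assume "p \<in> {1..n}"
    then have "p - 1 < length w" using lw by auto
    then have "w ! (p - 1) \<in> set w" by (rule nth_mem)
    then show ?thesis using vals by blast
  qed
  have FNS: "{1..n} = F \<union> NS" "F \<inter> NS = {}" unfolding F_def NS_def using wv by force+
  have sL: "sorted_wrt (<) L" unfolding L_def by (rule sorted_wrt_filter) (rule sorted_wrt_upt)
  have dL: "distinct L" using sL strict_sorted_iff by blast
  have setL: "set L = NS" unfolding L_def NS_def by auto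
  have wmap: "w = map (\<lambda>p. w ! (p - 1)) [1..<n+1]"
    by (rule nth_equalityI) (simp_all add: lw del: upt_Suc)
  have DL: "D = map (\<lambda>p. w ! (p - 1)) L"
    unfolding D_def Pos_def L_def by (subst wmap) (simp add: filter_map comp_def del: upt_Suc)
  have lenD: "length D = length L" unfolding DL by simp
  have Dn: "D ! j = w ! (L ! j - 1)" if "j < length L" for j unfolding DL using that by simp
  have distD: "distinct D" and setD: "set D = {1..int (length D)}" and nfD: "\<And>j. j < length D \<Longrightarrow> D ! j \<noteq> int j + 1"
    using der unfolding der_list_def D_def by auto
  have Drange: "1 \<le> D ! j \<and> D ! j \<le> int (length L)" if "j < length L" for j
    using setD nth_mem[of j D] that lenD by auto
  define \<pi> where "\<pi> p = (if p \<in> NS then L ! (nat (w ! (p - 1)) - 1) else p)" for p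
  define \<phi> where "\<phi> p = (if p \<in> F then w ! (p - 1) else 0)" for p
  have idx: "\<exists>j<length L. p = L ! j" if "p \<in> NS" for p using that setL by (auto simp: in_set_conv_nth)
  have piL: "\<pi> (L ! j) = L ! (nat (D ! j) - 1)" if "j < length L" for j
  proof -
    have "L ! j \<in> NS" using setL that nth_mem by blast
    then show ?thesis unfolding \<pi>_def using Dn[OF that] by simp
  qed
  have tl: "nat (D ! j) - 1 < length L" if "j < length L" for j using Drange[OF that] by linarith
  have piNS: "\<pi> p \<in> NS" if pNS: "p \<in> NS" for p
  proof -
    obtain j where j: "j < length L" "p = L ! j" using idx[OF pNS] by blast
    show ?thesis using piL[OF j(1)] tl[OF j(1)] j setL nth_mem by metis
  qed
  have piF: "\<pi> p = p" if "p \<notin> NS" for p unfolding \<pi>_def using that by simp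
  have inj: "inj_on \<pi> {1..n}"
  proof (rule inj_onI)
    fix p q assume p: "p \<in> {1..n}" and q: "q \<in> {1..n}" and e: "\<pi> p = \<pi> q"
    show "p = q"
    proof (cases "p \<in> NS"; cases "q \<in> NS")
      assume pn: "p \<in> NS" and qn: "q \<in> NS"
      obtain j where j: "j < length L" "p = L ! j" using idx[OF pn] by blast
      obtain j' where j': "j' < length L" "q = L ! j'" using idx[OF qn] by blast
      have "L ! (nat (D ! j) - 1) = L ! (nat (D ! j') - 1)" using e piL j j' by simp
      then have "nat (D ! j) - 1 = nat (D ! j') - 1" using dL tl[OF j(1)] tl[OF j'(1)] nth_eq_iff_index_eq by blast
      then have "D ! j = D ! j'" using Drange[OF j(1)] Drange[OF j'(1)] by linarith
      then have "j = j'" using distD j j' lenD nth_eq_iff_index_eq by metis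
      then show "p = q" using j j' by simp
    next
      assume pn: "p \<in> NS" and qn: "q \<notin> NS"
      then have "\<pi> q \<notin> NS" using piF by simp
      then show "p = q" using piNS[OF pn] e by simp
    next
      assume pn: "p \<notin> NS" and qn: "q \<in> NS"
      then have "\<pi> p \<notin> NS" using piF by simp
      then show "p = q" using piNS[OF qn] e by simp
    next
      assume "p \<notin> NS" "q \<notin> NS" then show "p = q" using e piF by simp
    qed
  qed
  have img: "\<pi> ` {1..n} \<subseteq> {1..n}"
  proof
    fix y assume "y \<in> \<pi> ` {1..n}"
    then obtain p where p: "p \<in> {1..n}" "y = \<pi> p" by auto
    show "y \<in> {1..n}"
    proof (cases "p \<in> NS")
      case True then show ?thesis using piNS p unfolding NS_def by auto
    next
      case False then show ?thesis using piF p by simp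
    qed
  qed
  have perm: "\<pi> permutes {1..n}"
  proof (rule bij_imp_permutes)
    show "bij_betw \<pi> {1..n} {1..n}" unfolding bij_betw_def using inj endo_inj_surj[OF _ img inj] by simp
    fix x assume "x \<notin> {1..n}"
    then have "x \<notin> NS" unfolding NS_def by blast
    then show "\<pi> x = x" using piF by simp
  qed
  have FIXe: "FIX n \<pi> = F"
  proof (rule set_eqI, rule iffI)
    fix p assume p: "p \<in> FIX n \<pi>"
    then have p1: "p \<in> {1..n}" "\<pi> p = p" unfolding FIX_def by auto
    show "p \<in> F"
    proof (rule ccontr)
      assume "p \<notin> F"
      then have pn: "p \<in> NS" using FNS p1 by auto
      obtain j where j: "j < length L" "p = L ! j" using idx[OF pn] by blast
      have "L ! (nat (D ! j) - 1) = L ! j" using piL[OF j(1)] p1 j by simp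
      then have "nat (D ! j) - 1 = j" using dL tl[OF j(1)] j(1) nth_eq_iff_index_eq by blast
      then have "D ! j = int j + 1" using Drange[OF j(1)] by linarith
      then show False using nfD[of j] j lenD by simp
    qed
  next
    fix p assume p: "p \<in> F"
    then have "p \<notin> NS" using FNS by auto
    then show "p \<in> FIX n \<pi>" using p piF unfolding FIX_def F_def by simp
  qed
  have phi_ok: "\<forall>i. if i \<in> FIX n \<pi> then \<phi> i \<in> {- int k..-1} else \<phi> i = 0"
  proof
    fix i
    show "if i \<in> FIX n \<pi> then \<phi> i \<in> {- int k..-1} else \<phi> i = 0"
    proof (cases "i \<in> F")
      case True
      then have "w ! (i - 1) < 0" "- int k \<le> w ! (i - 1)" using wv unfolding F_def by auto
      then show ?thesis using True FIXe unfolding \<phi>_def by auto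
    next
      case False then show ?thesis using FIXe unfolding \<phi>_def by simp
    qed
  qed
  have arr: "(\<pi>, \<phi>) \<in> arrangements n k"
    unfolding arrangements_def mem_Collect_eq case_prod_conv using perm phi_ok by blast
  have NFe: "NF n \<pi> = NS" unfolding NF_def FIXe using FNS by auto
  have dfw: "df n k (\<pi>, \<phi>) = w"
  proof (rule nth_equalityI)
    show "length (df n k (\<pi>, \<phi>)) = length w" using lw by simp
  next
    fix i assume "i < length (df n k (\<pi>, \<phi>))"
    then have i: "i < n" by simp
    show "df n k (\<pi>, \<phi>) ! i = w ! i"
    proof (cases "Suc i \<in> F")
      case True then show ?thesis using df_nth[OF arr i] FIXe unfolding \<phi>_def by simp
    next
      case False
      then have pn: "Suc i \<in> NS" using FNS i by auto
      obtain j where j: "j < length L" "Suc i = L ! j" using idx[OF pn] by blast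
      have "rk (NF n \<pi>) (\<pi> (Suc i)) = Suc (nat (D ! j) - 1)"
        unfolding NFe setL[symmetric] rk_def using piL[OF j(1)] j(2) sorted_card_le[OF sL tl[OF j(1)]] by simp
      also have "\<dots> = nat (D ! j)" using Drange[OF j(1)] by linarith
      finally have "int (rk (NF n \<pi>) (\<pi> (Suc i))) = D ! j" using Drange[OF j(1)] by simp
      also have "\<dots> = w ! i" using Dn[OF j(1)] j(2) by (metis diff_Suc_1)
      finally show ?thesis using df_nth[OF arr i] False FIXe by simp
    qed
  qed
  have "(\<pi>, \<phi>) \<in> arrangements_m n k m"
    unfolding arrangements_m_def using arr fix_i_count[OF arr] dfw cnts by auto
  then show ?thesis using dfw by blast
qed

lemma des_arr_eq': "a \<in> arrangements n k \<Longrightarrow> des_arr n k a = desW k (df n k a)"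
  using des_arr_eq by (cases a) auto

lemma df_bij: "bij_betw (df n k) (arrangements_m n k m) (Wd n k m)"
proof -
  have sub: "arrangements_m n k m \<subseteq> arrangements n k" unfolding arrangements_m_def by auto
  have inj: "inj_on (df n k) (arrangements_m n k m)" using inj_on_subset[OF df_inj sub] .
  have "df n k ` arrangements_m n k m = Wd n k m"
  proof
    show "df n k ` arrangements_m n k m \<subseteq> Wd n k m"
    proof
      fix y assume "y \<in> df n k ` arrangements_m n k m"
      then obtain a where a: "a \<in> arrangements_m n k m" "y = df n k a" by auto
      obtain \<pi> \<phi> where "a = (\<pi>, \<phi>)" by force
      then show "y \<in> Wd n k m" using df_in_Wd a by simp
    qed
    show "Wd n k m \<subseteq> df n k ` arrangements_m n k m"
      using decode by force
  qed
  then show ?thesis using inj unfolding bij_betw_def by simp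
qed

theorem theorem1p2:
  fixes n k :: nat and m :: "nat list" and \<tau> :: "nat \<Rightarrow> nat"
  assumes "n \<ge> 1" and "k \<ge> 1" and "length m = k"
    and "\<tau> permutes {1..k-1}"
  shows "\<exists>\<Psi>. bij_betw \<Psi> (arrangements_m n k m)
              (arrangements_m n k (map (\<lambda>i. m ! (\<tau> i - 1)) [1..<k] @ [m ! (k - 1)])) \<and>
            (\<forall>a \<in> arrangements_m n k m.
               des_arr n k a = dez_arr n k (\<Psi> a) \<and>
               dez_arr n k a = des_arr n k (\<Psi> a) \<and>
               Der_arr n k a = Der_arr n k (\<Psi> a))"
proof -
  define m' where "m' = map (\<lambda>i. m ! (\<tau> i - 1)) [1..<k] @ [m ! (k - 1)]"
  have k: "k > 0" using assms(2) by simp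
  obtain F where F: "bij_betw F (Wd n k m) (Wd n k m')"
    "\<forall>w\<in>Wd n k m. des_word (F w) = desW k w \<and> desW k (F w) = des_word w \<and> Pos (F w) = Pos w"
    using word_main[OF k assms(3,4)] unfolding m'_def by blast
  define G where "G = the_inv_into (arrangements_m n k m') (df n k)"
  have b1: "bij_betw (df n k) (arrangements_m n k m) (Wd n k m)" by (rule df_bij)
  have b2: "bij_betw (df n k) (arrangements_m n k m') (Wd n k m')" by (rule df_bij)
  have bG: "bij_betw G (Wd n k m') (arrangements_m n k m')"
    unfolding G_def by (rule bij_betw_the_inv_into[OF b2])
  define \<Psi> where "\<Psi> = G \<circ> (F \<circ> df n k)"
  have bP: "bij_betw \<Psi> (arrangements_m n k m) (arrangements_m n k m')"
    unfolding \<Psi>_def by (rule bij_betw_trans[OF bij_betw_trans[OF b1 F(1)] bG])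
  have dfP: "df n k (\<Psi> a) = F (df n k a)" if a: "a \<in> arrangements_m n k m" for a
  proof -
    have "df n k a \<in> Wd n k m" using b1 a bij_betwE by blast
    then have "F (df n k a) \<in> Wd n k m'" using F(1) bij_betwE by blast
    then have "F (df n k a) \<in> df n k ` arrangements_m n k m'" using b2 by (simp add: bij_betw_def)
    then show ?thesis unfolding \<Psi>_def G_def comp_def
      using f_the_inv_into_f[OF bij_betw_imp_inj_on[OF b2]] by blast
  qed
  have props: "des_arr n k a = dez_arr n k (\<Psi> a) \<and> dez_arr n k a = des_arr n k (\<Psi> a) \<and>
               Der_arr n k a = Der_arr n k (\<Psi> a)" if a: "a \<in> arrangements_m n k m" for a
  proof -
    have a0: "a \<in> arrangements n k" using a unfolding arrangements_m_def by simp
    have Pa: "\<Psi> a \<in> arrangements_m n k m'" using bP a bij_betwE by blast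
    then have Pa0: "\<Psi> a \<in> arrangements n k" unfolding arrangements_m_def by simp
    have w: "df n k a \<in> Wd n k m" using b1 a bij_betwE by blast
    note Fw = F(2)[rule_format, OF w]
    show ?thesis
      unfolding dez_arr_def Der_arr_def des_arr_eq'[OF a0] des_arr_eq'[OF Pa0] dfP[OF a]
      using Fw by simp
  qed
  show ?thesis using bP props unfolding m'_def by blast
qed


end
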